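(* Let $(q_n),(r_n)$ be complex sequences vanishing faster than any negative power of $|n|$ as $n\to\pm\infty$ with $1-q_nr_n\neq0$ and $1+q_nr_{n+1}\ne0$ for all $n$. Let $D_n,E_n,D_\infty,E_\infty$ and the sequences $u_n,v_n,p_n,s_n$ be as in the context. Let $\psi_n^{(q,r)},\phi_n^{(q,r)},\bar\psi_n^{(q,r)},\bar\phi_n^{(q,r)}$ be the Jost solutions of system (Q), and similarly with superscripts $(u,v)$ for system (U) with potentials $(u,v)$ and $(p,s)$ for system (U) with potentials $(p,s)$. Put $$\Gamma_n=\begin{bmatrix}(1-z^{-2})\frac1{E_{n-1}}&0\\ \frac{r_n}{E_{n-1}}&\frac1{D_{n-1}}\end{bmatrix},\qquad \Lambda_n=\begin{bmatrix}\frac1{E_{n-1}}&-\frac{q_n}{D_n}\\ \frac{r_n}{E_{n-1}}&\frac1{D_{n-1}}\end{bmatrix}.$$ Then $$\psi_n^{(q,r)}=D_\infty\Gamma_n\psi_n^{(u,v)}=D_\infty\Lambda_n\psi_n^{(p,s)},\qquad \phi_n^{(q,r)}=\frac{1}{1-z^{-2}}\Gamma_n\phi_n^{(u,v)}=\Lambda_n\phi_n^{(p,s)},$$ $$\bar\psi_n^{(q,r)}=\frac{E_\infty}{1-z^{-2}}\Gamma_n\bar\psi_n^{(u,v)}=E_\infty\Lambda_n\bar\psi_n^{(p,s)},\qquad \bar\phi_n^{(q,r)}=\Gamma_n\bar\phi_n^{(u,v)}=\Lambda_n\bar\phi_n^{(p,s)}.$$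
   Context: System (Q): $\begin{bmatrix}\alpha_n\\ \beta_n\end{bmatrix}=\begin{bmatrix} z & (z-z^{-1})q_n\\ z r_n & z^{-1}+(z-z^{-1})q_nr_n\end{bmatrix}\begin{bmatrix}\alpha_{n+1}\\ \beta_{n+1}\end{bmatrix}$, $n\in\mathbb Z$. System (U) with potentials $(a,b)$: $\begin{bmatrix}\xi_n\\ \eta_n\end{bmatrix}=\begin{bmatrix} z & z a_n\\ z^{-1}b_n & z^{-1}\end{bmatrix}\begin{bmatrix}\xi_{n+1}\\ \eta_{n+1}\end{bmatrix}$. Notation: $D_n=\prod_{j=-\infty}^n(1-q_jr_j)$, $E_n=\prod_{j=-\infty}^n(1+q_jr_{j+1})$, $D_\infty=\prod_{j\in\mathbb Z}(1-q_jr_j)$, $E_\infty=\prod_{j\in\mathbb Z}(1+q_jr_{j+1})$; $u_n=q_nE_{n-1}/D_n$, $v_n=(-r_n+r_{n+1}-q_nr_nr_{n+1})D_{n-1}/E_n$, $p_n=(q_n-q_{n+1}-q_nq_{n+1}r_{n+1})E_{n-1}/D_{n+1}$, $s_n=r_{n+1}D_n/E_n$. For each of the three systems and $|z|=1$, the Jost solutions (overbars are not complex conjugation) are the unique solutions with $\psi_n=\begin{bmatrix}o(1)\\ z^n[1+o(1)]\end{bmatrix}$ as $n\to+\infty$; $\phi_n=\begin{bmatrix}z^{-n}[1+o(1)]\\ o(1)\end{bmatrix}$ as $n\to-\infty$; $\bar\psi_n=\begin{bmatrix}z^{-n}[1+o(1)]\\ o(1)\end{bmatrix}$ as $n\to+\infty$;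 $\bar\phi_n=\begin{bmatrix}o(1)\\ z^{n}[1+o(1)]\end{bmatrix}$ as $n\to-\infty$. *)

theory Defs
  imports Complex_Main
begin

definition rapid_decay :: "(int \<Rightarrow> complex) \<Rightarrow> bool" where
  "rapid_decay q \<longleftrightarrow> (\<forall>k::nat.
     ((\<lambda>n. real_of_int \<bar>n\<bar> ^ k * cmod (q n)) \<longlongrightarrow> 0) at_top \<and>
     ((\<lambda>n. real_of_int \<bar>n\<bar> ^ k * cmod (q n)) \<longlongrightarrow> 0) at_bot)"

definition Dn :: "(int \<Rightarrow> complex) \<Rightarrow> (int \<Rightarrow> complex) \<Rightarrow> int \<Rightarrow> complex" where
  "Dn q r n = Lim at_bot (\<lambda>m. \<Prod>j\<in>{m..n}. (1 - q j * r j))"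

definition En :: "(int \<Rightarrow> complex) \<Rightarrow> (int \<Rightarrow> complex) \<Rightarrow> int \<Rightarrow> complex" where
  "En q r n = Lim at_bot (\<lambda>m. \<Prod>j\<in>{m..n}. (1 + q j * r (j + 1)))"

definition Dinf :: "(int \<Rightarrow> complex) \<Rightarrow> (int \<Rightarrow> complex) \<Rightarrow> complex" where
  "Dinf q r = Lim at_top (\<lambda>n. Dn q r n)"

definition Einf :: "(int \<Rightarrow> complex) \<Rightarrow> (int \<Rightarrow> complex) \<Rightarrow> complex" where
  "Einf q r = Lim at_top (\<lambda>n. En q r n)"

definition useq :: "(int \<Rightarrow> complex) \<Rightarrow> (int \<Rightarrow> complex) \<Rightarrow> int \<Rightarrow> complex" where
  "useq q r n = q n * En q r (n - 1) / Dn q r n"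

definition vseq :: "(int \<Rightarrow> complex) \<Rightarrow> (int \<Rightarrow> complex) \<Rightarrow> int \<Rightarrow> complex" where
  "vseq q r n = (- r n + r (n + 1) - q n * r n * r (n + 1)) * Dn q r (n - 1) / En q r n"

definition pseq :: "(int \<Rightarrow> complex) \<Rightarrow> (int \<Rightarrow> complex) \<Rightarrow> int \<Rightarrow> complex" where
  "pseq q r n = (q n - q (n + 1) - q n * q (n + 1) * r (n + 1)) * En q r (n - 1) / Dn q r (n + 1)"

definition sseq :: "(int \<Rightarrow> complex) \<Rightarrow> (int \<Rightarrow> complex) \<Rightarrow> int \<Rightarrow> complex" where
  "sseq q r n = r (n + 1) * Dn q r n / En q r n"

text \<open>One step of the systems: the value at n is the matrix applied to the value at n+1.\<close>

definition Qstep :: "(int \<Rightarrow> complex) \<Rightarrow> (int \<Rightarrow> complex) \<Rightarrow> complex \<Rightarrow> int \<Rightarrow>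
    complex \<times> complex \<Rightarrow> complex \<times> complex" where
  "Qstep q r z n w =
    (z * fst w + (z - inverse z) * q n * snd w,
     z * r n * fst w + (inverse z + (z - inverse z) * q n * r n) * snd w)"

definition Ustep :: "(int \<Rightarrow> complex) \<Rightarrow> (int \<Rightarrow> complex) \<Rightarrow> complex \<Rightarrow> int \<Rightarrow>
    complex \<times> complex \<Rightarrow> complex \<times> complex" where
  "Ustep a b z n w =
    (z * fst w + z * a n * snd w,
     inverse z * b n * fst w + inverse z * snd w)"

definition solves :: "(int \<Rightarrow> complex \<times> complex \<Rightarrow> complex \<times> complex) \<Rightarrow>
    (int \<Rightarrow> complex \<times> complex) \<Rightarrow> bool" where
  "solves T f \<longleftrightarrow> (\<forall>n. f n = T n (f (n + 1)))"

definition psi_cond :: "complex \<Rightarrow> (int \<Rightarrow> complex \<times> complex) \<Rightarrow> bool" where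
  "psi_cond z f \<longleftrightarrow> ((\<lambda>n. fst (f n)) \<longlongrightarrow> 0) at_top \<and>
     ((\<lambda>n. snd (f n) * z powi (- n)) \<longlongrightarrow> 1) at_top"

definition phi_cond :: "complex \<Rightarrow> (int \<Rightarrow> complex \<times> complex) \<Rightarrow> bool" where
  "phi_cond z f \<longleftrightarrow> ((\<lambda>n. fst (f n) * z powi n) \<longlongrightarrow> 1) at_bot \<and>
     ((\<lambda>n. snd (f n)) \<longlongrightarrow> 0) at_bot"

definition psibar_cond :: "complex \<Rightarrow> (int \<Rightarrow> complex \<times> complex) \<Rightarrow> bool" where
  "psibar_cond z f \<longleftrightarrow> ((\<lambda>n. fst (f n) * z powi n) \<longlongrightarrow> 1) at_top \<and>
     ((\<lambda>n. snd (f n)) \<longlongrightarrow> 0) at_top"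

definition phibar_cond :: "complex \<Rightarrow> (int \<Rightarrow> complex \<times> complex) \<Rightarrow> bool" where
  "phibar_cond z f \<longleftrightarrow> ((\<lambda>n. fst (f n)) \<longlongrightarrow> 0) at_bot \<and>
     ((\<lambda>n. snd (f n) * z powi (- n)) \<longlongrightarrow> 1) at_bot"

definition jost_psi where "jost_psi T z = (THE f. solves T f \<and> psi_cond z f)"
definition jost_phi where "jost_phi T z = (THE f. solves T f \<and> phi_cond z f)"
definition jost_psibar where "jost_psibar T z = (THE f. solves T f \<and> psibar_cond z f)"
definition jost_phibar where "jost_phibar T z = (THE f. solves T f \<and> phibar_cond z f)"

definition Gamma :: "(int \<Rightarrow> complex) \<Rightarrow> (int \<Rightarrow> complex) \<Rightarrow> complex \<Rightarrow> int \<Rightarrow>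
    complex \<times> complex \<Rightarrow> complex \<times> complex" where
  "Gamma q r z n w =
    ((1 - inverse (z ^ 2)) / En q r (n - 1) * fst w,
     r n / En q r (n - 1) * fst w + 1 / Dn q r (n - 1) * snd w)"

definition Lambda :: "(int \<Rightarrow> complex) \<Rightarrow> (int \<Rightarrow> complex) \<Rightarrow> int \<Rightarrow>
    complex \<times> complex \<Rightarrow> complex \<times> complex" where
  "Lambda q r n w =
    (1 / En q r (n - 1) * fst w - q n / Dn q r n * snd w,
     r n / En q r (n - 1) * fst w + 1 / Dn q r (n - 1) * snd w)"

definition csmult :: "complex \<Rightarrow> complex \<times> complex \<Rightarrow> complex \<times> complex" where
  "csmult c w = (c * fst w, c * snd w)"

end

theory Submission
  imports Defs "HOL-Analysis.Infinite_Products" "HOL-Analysis.Summation_Tests"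
begin


lemma suminf_tail0:
  fixes f :: "nat \<Rightarrow> real"
  assumes "summable f" shows "(\<lambda>n. \<Sum>k. f (k + n)) \<longlonglongrightarrow> 0"
proof -
  have "(\<lambda>n. (\<Sum>k. f k) - (\<Sum>i<n. f i)) \<longlonglongrightarrow> (\<Sum>k. f k) - (\<Sum>k. f k)"
    by (intro tendsto_intros summable_LIMSEQ assms)
  then show ?thesis using suminf_minus_initial_segment[OF assms] by simp
qed


primrec phi :: "(int \<Rightarrow> 'a \<Rightarrow> 'a) \<Rightarrow> int \<Rightarrow> nat \<Rightarrow> 'a \<Rightarrow> 'a" where
  "phi T n 0 w = w"
| "phi T n (Suc k) w = T n (phi T (n+1) k w)"

lemma phi_Suc': "phi T n (Suc k) w = phi T n k (T (n + int k) w)"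
proof (induction k arbitrary: n)
  case 0 then show ?case by simp
next
  case (Suc k)
  have "phi T n (Suc (Suc k)) w = T n (phi T (n+1) (Suc k) w)" by simp
  also have "\<dots> = T n (phi T (n+1) k (T (n+1+int k) w))" by (simp only: Suc.IH)
  also have "\<dots> = phi T n (Suc k) (T (n + int (Suc k)) w)" by (simp add: add_ac)
  finally show ?case .
qed

lemma phi_bl: "(\<And>n. bounded_linear (T n)) \<Longrightarrow> bounded_linear (phi T n k)"
proof (induction k arbitrary: n)
  case 0 then show ?case by (simp add: bounded_linear_ident[unfolded id_def])
next
  case (Suc k)
  have "bounded_linear (\<lambda>w. T n (phi T (n+1) k w))"
    using bounded_linear_compose[OF Suc.prems Suc.IH[OF Suc.prems]] by simp
  then show ?case by simp
qed

lemma prod_le_exp_sum: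
  fixes b :: "nat \<Rightarrow> real"
  assumes "\<And>i. b i \<ge> 0"
  shows "(\<Prod>i<k. 1 + b i) \<le> exp (\<Sum>i<k. b i)"
proof -
  have "(\<Prod>i<k. 1 + b i) \<le> (\<Prod>i<k. exp (b i))"
    by (rule prod_mono) (use assms exp_ge_add_one_self in \<open>auto intro: add_nonneg_nonneg\<close>)
  also have "\<dots> = exp (\<Sum>i<k. b i)" by (simp add: exp_sum)
  finally show ?thesis .
qed

lemma phi_norm:
  fixes T :: "int \<Rightarrow> 'a::real_normed_vector \<Rightarrow> 'a"
  assumes bd: "\<And>n w. norm (T n w - w) \<le> \<beta> n * norm w"
    and pos: "\<And>n. \<beta> n \<ge> 0"
  shows "norm (phi T n k w) \<le> (\<Prod>i<k. 1 + \<beta> (n + int i)) * norm w"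
proof (induction k arbitrary: n)
  case 0 then show ?case by simp
next
  case (Suc k)
  have T1: "norm (T m v) \<le> (1 + \<beta> m) * norm v" for m v
  proof -
    have "norm (T m v) \<le> norm (T m v - v) + norm v" by (metis norm_triangle_sub add.commute)
    then show ?thesis using bd[of m v] by (simp add: algebra_simps)
  qed
  have "norm (phi T n (Suc k) w) \<le> (1 + \<beta> n) * norm (phi T (n+1) k w)"
    using T1 by simp
  also have "\<dots> \<le> (1 + \<beta> n) * ((\<Prod>i<k. 1 + \<beta> (n + 1 + int i)) * norm w)"
    by (rule mult_left_mono[OF Suc.IH]) (use pos[of n] in simp)
  also have "\<dots> = (\<Prod>i<Suc k. 1 + \<beta> (n + int i)) * norm w"
    by (simp only: prod.lessThan_Suc_shift) (simp add: add_ac)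
  finally show ?case .
qed

lemma phi_bound:
  fixes T :: "int \<Rightarrow> 'a::real_normed_vector \<Rightarrow> 'a"
  assumes bd: "\<And>n w. norm (T n w - w) \<le> \<beta> n * norm w"
    and pos: "\<And>n. \<beta> n \<ge> 0"
    and sm: "summable (\<lambda>i. \<beta> (n + int i))"
  shows "norm (phi T n k w) \<le> exp (\<Sum>i. \<beta> (n + int i)) * norm w"
proof -
  have "norm (phi T n k w) \<le> (\<Prod>i<k. 1 + \<beta> (n + int i)) * norm w"
    by (rule phi_norm[OF bd pos])
  also have "\<dots> \<le> exp (\<Sum>i<k. \<beta> (n + int i)) * norm w"
    by (rule mult_right_mono[OF prod_le_exp_sum]) (use pos in auto)
  also have "\<dots> \<le> exp (\<Sum>i. \<beta> (n + int i)) * norm w"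
    by (rule mult_right_mono) (use sm pos in \<open>auto intro!: sum_le_suminf\<close>)
  finally show ?thesis .
qed

lemma sol_phi:
  assumes "\<forall>n. x n = T n (x (n+1))"
  shows "x n = phi T n k (x (n + int k))"
proof (induction k arbitrary: n)
  case 0 then show ?case by simp
next
  case (Suc k)
  have "x n = T n (x (n+1))" using assms by blast
  also have "\<dots> = T n (phi T (n+1) k (x (n + 1 + int k)))" by (simp only: Suc.IH[symmetric])
  also have "\<dots> = phi T n (Suc k) (x (n + int (Suc k)))" by (simp add: add_ac)
  finally show ?case .
qed

lemma shift_top: "filterlim (\<lambda>k::nat. n + int k) at_top sequentially"
  unfolding filterlim_at_top eventually_sequentially
proof (intro allI)
  fix Z show "\<exists>N. \<forall>k\<ge>N. Z \<le> n + int k" by (rule exI[of _ "nat (Z - n)"]) auto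
qed

lemma gen_sol:
  fixes T :: "int \<Rightarrow> 'a::banach \<Rightarrow> 'a" and \<beta> :: "int \<Rightarrow> real"
  assumes bl: "\<And>n. bounded_linear (T n)"
    and bd: "\<And>n w. norm (T n w - w) \<le> \<beta> n * norm w"
    and pos: "\<And>n. \<beta> n \<ge> 0"
    and sm: "\<And>n. summable (\<lambda>k. \<beta> (n + int k))"
  shows "\<exists>!x. (\<forall>n. x n = T n (x (n+1))) \<and> (x \<longlongrightarrow> c) at_top"
proof -
  define S where "S n = (\<Sum>i. \<beta> (n + int i))" for n
  define d where "d n k = phi T n (Suc k) c - phi T n k c" for n k
  have Spos: "S n \<ge> 0" for n unfolding S_def by (rule suminf_nonneg[OF sm]) (use pos in auto)
  have dnorm: "norm (d n k) \<le> exp (S n) * norm c * \<beta> (n + int k)" for n k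
  proof -
    have "d n k = phi T n k (T (n + int k) c - c)"
      unfolding d_def phi_Suc' using linear_diff[OF bounded_linear.linear[OF phi_bl[OF bl]]] by simp
    also have "norm \<dots> \<le> exp (S n) * norm (T (n + int k) c - c)"
      unfolding S_def by (rule phi_bound[OF bd pos sm])
    also have "\<dots> \<le> exp (S n) * (\<beta> (n + int k) * norm c)"
      by (rule mult_left_mono[OF bd]) simp
    finally show ?thesis by (simp add: algebra_simps)
  qed
  have dsum: "summable (\<lambda>k. norm (d n k))" for n
    by (rule summable_comparison_test[OF _ summable_mult[OF sm, of "exp (S n) * norm c"]])
       (use dnorm in auto)
  have dsum2: "summable (d n)" for n using dsum by (rule summable_norm_cancel)
  define x where "x n = c + suminf (d n)" for n
  have conv: "(\<lambda>k. phi T n k c) \<longlonglongrightarrow> x n" for n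
  proof -
    have eq: "phi T n k c = c + (\<Sum>i<k. d n i)" for k
      unfolding d_def by (simp only: sum_lessThan_telescope[where f="\<lambda>i. phi T n i c"]) simp
    show ?thesis unfolding eq x_def
      by (intro tendsto_add tendsto_const summable_LIMSEQ dsum2)
  qed
  have solves: "x n = T n (x (n+1))" for n
  proof -
    have "(\<lambda>k. phi T n (Suc k) c) \<longlonglongrightarrow> x n" using conv[of n] by (rule LIMSEQ_Suc)
    moreover have "(\<lambda>k. phi T n (Suc k) c) \<longlonglongrightarrow> T n (x (n+1))"
      unfolding phi.simps by (rule bounded_linear.tendsto[OF bl conv])
    ultimately show ?thesis by (rule LIMSEQ_unique)
  qed
  have xc: "norm (x n - c) \<le> exp (S n) * norm c * S n" for n
  proof -
    have "norm (x n - c) = norm (suminf (d n))" by (simp add: x_def)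
    also have "\<dots> \<le> (\<Sum>k. norm (d n k))" by (rule summable_norm[OF dsum])
    also have "\<dots> \<le> (\<Sum>k. exp (S n) * norm c * \<beta> (n + int k))"
      by (rule suminf_le[OF dnorm dsum summable_mult[OF sm]])
    also have "\<dots> = exp (S n) * norm c * S n" unfolding S_def by (rule suminf_mult[OF sm])
    finally show ?thesis .
  qed
  have S0: "(S \<longlongrightarrow> 0) at_top"
  proof (rule filterlim_int_of_nat_at_topD)
    have "(\<lambda>m. \<Sum>k. \<beta> (int (k + m))) \<longlonglongrightarrow> 0"
      using suminf_tail0[OF sm[of 0]] by simp
    then show "(\<lambda>m. S (int m)) \<longlonglongrightarrow> 0" unfolding S_def by (simp add: add.commute)
  qed
  have xlim: "(x \<longlongrightarrow> c) at_top"
  proof -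
    have "((\<lambda>n. exp (S n) * norm c * S n) \<longlongrightarrow> exp 0 * norm c * 0) at_top"
      by (intro tendsto_intros S0)
    then have g0: "((\<lambda>n. exp (S n) * norm c * S n) \<longlongrightarrow> 0) at_top" by simp
    have "((\<lambda>n. x n - c) \<longlongrightarrow> 0) at_top"
      by (rule Lim_null_comparison[OF always_eventually[OF allI[OF xc]] g0])
    then show ?thesis by (simp add: LIM_zero_iff)
  qed
  show ?thesis
  proof (rule ex1I[of _ x])
    show "(\<forall>n. x n = T n (x (n + 1))) \<and> (x \<longlongrightarrow> c) at_top" using solves xlim by blast
  next
    fix y assume y: "(\<forall>n. y n = T n (y (n + 1))) \<and> (y \<longlongrightarrow> c) at_top"
    define e where "e n = y n - x n" for n
    have esol: "\<forall>n. e n = T n (e (n+1))"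
      unfolding e_def using y solves linear_diff[OF bounded_linear.linear[OF bl]] by metis
    have elim: "(e \<longlongrightarrow> 0) at_top"
      unfolding e_def using tendsto_diff[OF conjunct2[OF y] xlim] by simp
    have "e n = 0" for n
    proof -
      have le: "norm (e n) \<le> exp (S n) * norm (e (n + int k))" for k
        using phi_bound[OF bd pos sm, of n k "e (n + int k)"] sol_phi[where x=e and T=T, OF esol, of n k]
        unfolding S_def by simp
      have "(\<lambda>k. e (n + int k)) \<longlonglongrightarrow> 0"
        by (rule filterlim_compose[OF elim]) (rule shift_top)
      then have "(\<lambda>k. exp (S n) * norm (e (n + int k))) \<longlonglongrightarrow> exp (S n) * 0"
        by (intro tendsto_intros) (simp add: tendsto_norm_zero_iff)
      then have "norm (e n) \<le> exp (S n) * 0"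
        by (rule tendsto_lowerbound) (use le in auto)
      then show ?thesis by simp
    qed
    then show "y = x" unfolding e_def by (auto simp: fun_eq_iff)
  qed
qed



definition mv :: "complex \<Rightarrow> complex \<Rightarrow> complex \<Rightarrow> complex \<Rightarrow> complex \<times> complex \<Rightarrow> complex \<times> complex" where
  "mv a b c d w = (a * fst w + b * snd w, c * fst w + d * snd w)"

definition zsum :: "(int \<Rightarrow> real) \<Rightarrow> bool" where
  "zsum \<beta> \<longleftrightarrow> (\<forall>n. summable (\<lambda>k. \<beta> (n + int k))) \<and> (\<forall>n. summable (\<lambda>k. \<beta> (n - int k)))"

lemma mv_bl: "bounded_linear (mv a b c d)"
  unfolding mv_def
  by (intro bounded_linear_Pair bounded_linear_add
        bounded_linear_compose[OF bounded_linear_mult_right bounded_linear_fst]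
        bounded_linear_compose[OF bounded_linear_mult_right bounded_linear_snd])

lemma mv_norm: "norm (mv a b c d w) \<le> (cmod a + cmod b + cmod c + cmod d) * norm w"
proof (cases w)
  case (Pair w1 w2)
  have n1: "cmod w1 \<le> norm w" "cmod w2 \<le> norm w" using Pair norm_fst_le norm_snd_le by auto
  have "norm (mv a b c d w) \<le> cmod (a * w1 + b * w2) + cmod (c * w1 + d * w2)"
    unfolding mv_def Pair by (simp add: norm_Pair_le)
  also have "\<dots> \<le> (cmod a * cmod w1 + cmod b * cmod w2) + (cmod c * cmod w1 + cmod d * cmod w2)"
    by (intro add_mono) (metis norm_mult norm_triangle_ineq)+
  also have "\<dots> \<le> (cmod a * norm w + cmod b * norm w) + (cmod c * norm w + cmod d * norm w)"
    by (intro add_mono mult_left_mono n1) auto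
  finally show ?thesis by (simp add: algebra_simps)
qed

lemma mv_diff: "mv a b c d w - mv a' b' c' d' w = mv (a - a') (b - b') (c - c') (d - d') w"
  by (simp add: mv_def algebra_simps)

lemma mv_comp: "mv a' b' c' d' (mv a b c d w) =
   mv (a'*a + b'*c) (a'*b+b'*d) (c'*a+d'*c) (c'*b+d'*d) w"
  by (simp add: mv_def algebra_simps)

lemma mv_id: "mv 1 0 0 1 w = w" by (simp add: mv_def)

definition KK :: "complex \<Rightarrow> int \<Rightarrow> complex \<times> complex \<Rightarrow> complex \<times> complex" where
  "KK z n w = (z powi n * fst w, z powi (-n) * snd w)"

lemma KK_inv: "z \<noteq> 0 \<Longrightarrow> KK z (-n) (KK z n w) = w"
  by (simp add: KK_def power_int_minus field_simps)

lemma KK_diff: "KK z n v - KK z n w = KK z n (v - w)"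
  by (simp add: KK_def algebra_simps)

lemma unimod_powi: "cmod z = 1 \<Longrightarrow> cmod (z powi n) = 1"
  by (simp add: norm_power_int)

lemma KK_norm: "cmod z = 1 \<Longrightarrow> norm (KK z n w) = norm w"
  by (cases w) (simp add: KK_def norm_Pair norm_mult unimod_powi)

lemma KK_M0:
  assumes z0: "z \<noteq> 0" shows "KK z n (mv z 0 0 (inverse z) (KK z (-(n+1)) w)) = w"
proof -
  have e1: "z powi n * z powi (-(n+1)) = z powi (-1)"
    by (subst power_int_add[symmetric]) (auto simp: z0)
  have e2: "z powi (-n) * z powi (n+1) = z powi 1"
    by (subst power_int_add[symmetric]) (auto simp: z0)
  have f1: "z powi n * (z * (z powi (-(n+1)) * fst w)) = fst w"
    using e1 z0 by (simp add: power_int_minus field_simps)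
  have f2: "z powi (-n) * (inverse z * (z powi (n+1) * snd w)) = snd w"
  proof -
    have "z powi (-n) * (inverse z * (z powi (n+1) * snd w)) = (z powi (-n) * z powi (n+1)) * inverse z * snd w"
      by (simp add: algebra_simps)
    also have "\<dots> = snd w" using e2 z0 by simp
    finally show ?thesis .
  qed
  have "(z powi n * (z * (z powi (-(n+1)) * fst w)), z powi (-n) * (inverse z * (z powi (n+1) * snd w))) = w"
    unfolding f1 f2 by simp
  moreover have "KK z n (mv z 0 0 (inverse z) (KK z (-(n+1)) w)) = (z powi n * (z * (z powi (-(n+1)) * fst w)), z powi (-n) * (inverse z * (z powi (n+1) * snd w)))"
    by (simp add: KK_def mv_def add.commute)
  ultimately show ?thesis by simp
qed

lemma tendsto_Pair_iff:
  "(g \<longlongrightarrow> (a, b)) F \<longleftrightarrow> ((\<lambda>x. fst (g x)) \<longlongrightarrow> a) F \<and> ((\<lambda>x. snd (g x)) \<longlongrightarrow> b) F"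
proof
  assume "(g \<longlongrightarrow> (a, b)) F"
  then show "((\<lambda>x. fst (g x)) \<longlongrightarrow> a) F \<and> ((\<lambda>x. snd (g x)) \<longlongrightarrow> b) F"
    using tendsto_fst tendsto_snd by fastforce
next
  assume "((\<lambda>x. fst (g x)) \<longlongrightarrow> a) F \<and> ((\<lambda>x. snd (g x)) \<longlongrightarrow> b) F"
  then have "((\<lambda>x. (fst (g x), snd (g x))) \<longlongrightarrow> (a, b)) F" by (intro tendsto_Pair) auto
  then show "(g \<longlongrightarrow> (a, b)) F" by simp
qed

lemma tendsto_unimod0:
  assumes "\<And>x. cmod (u x) = 1"
  shows "((\<lambda>x. u x * y x) \<longlongrightarrow> 0) F \<longleftrightarrow> ((\<lambda>x. y x :: complex) \<longlongrightarrow> 0) F"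
proof -
  have "((\<lambda>x. u x * y x) \<longlongrightarrow> 0) F \<longleftrightarrow> ((\<lambda>x. norm (u x * y x)) \<longlongrightarrow> 0) F"
    by (rule tendsto_norm_zero_iff[symmetric])
  also have "\<dots> \<longleftrightarrow> ((\<lambda>x. norm (y x)) \<longlongrightarrow> 0) F" by (simp add: norm_mult assms)
  also have "\<dots> \<longleftrightarrow> (y \<longlongrightarrow> 0) F" by (rule tendsto_norm_zero_iff)
  finally show ?thesis .
qed

lemma tendsto_unimod0':
  assumes "\<And>x. cmod (u x) = 1"
  shows "((\<lambda>x. y x * u x) \<longlongrightarrow> 0) F \<longleftrightarrow> ((\<lambda>x. y x :: complex) \<longlongrightarrow> 0) F"
proof -
  have "((\<lambda>x. y x * u x) \<longlongrightarrow> 0) F \<longleftrightarrow> ((\<lambda>x. norm (y x * u x)) \<longlongrightarrow> 0) F"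
    by (rule tendsto_norm_zero_iff[symmetric])
  also have "\<dots> \<longleftrightarrow> ((\<lambda>x. norm (y x)) \<longlongrightarrow> 0) F" by (simp add: norm_mult assms)
  also have "\<dots> \<longleftrightarrow> (y \<longlongrightarrow> 0) F" by (rule tendsto_norm_zero_iff)
  finally show ?thesis .
qed

lemma ex1_transfer:
  assumes "\<exists>!x. Q x" and "\<And>f. P f \<longleftrightarrow> Q (H f)" and "\<And>f. G (H f) = f" and "\<And>x. H (G x) = x"
  shows "\<exists>!f. P f"
  using assms by metis

lemma sys_top_gen:
  assumes z1: "cmod z = 1"
    and zs: "zsum (\<lambda>n. cmod (a n - z) + cmod (b n) + cmod (c n) + cmod (d n - inverse z))"
  shows "\<exists>!x. (\<forall>n. x n = KK z n (mv (a n) (b n) (c n) (d n) (KK z (-(n+1)) (x (n+1))))) \<and> (x \<longlongrightarrow> c0) at_top"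
proof (rule gen_sol)
  have z0: "z \<noteq> 0" using z1 by auto
  show "bounded_linear (\<lambda>w. KK z n (mv (a n) (b n) (c n) (d n) (KK z (-(n+1)) w)))" for n
    unfolding KK_def
    by (intro bounded_linear_Pair bounded_linear_compose[OF bounded_linear_mult_right]
        bounded_linear_compose[OF bounded_linear_fst] bounded_linear_compose[OF bounded_linear_snd]
        bounded_linear_compose[OF mv_bl] bounded_linear_ident[unfolded id_def])
  show "norm (KK z n (mv (a n) (b n) (c n) (d n) (KK z (-(n+1)) w)) - w)
     \<le> (cmod (a n - z) + cmod (b n) + cmod (c n) + cmod (d n - inverse z)) * norm w" for n w
  proof -
    have "KK z n (mv (a n) (b n) (c n) (d n) (KK z (-(n+1)) w)) - w
        = KK z n (mv (a n) (b n) (c n) (d n) (KK z (-(n+1)) w)) - KK z n (mv z 0 0 (inverse z) (KK z (-(n+1)) w))"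
      using KK_M0[OF z0] by simp
    also have "\<dots> = KK z n (mv (a n - z) (b n) (c n) (d n - inverse z) (KK z (-(n+1)) w))"
      by (simp add: KK_diff mv_diff)
    finally have "norm (KK z n (mv (a n) (b n) (c n) (d n) (KK z (-(n+1)) w)) - w)
       = norm (mv (a n - z) (b n) (c n) (d n - inverse z) (KK z (-(n+1)) w))"
      by (simp add: KK_norm[OF z1])
    also have "\<dots> \<le> (cmod (a n - z) + cmod (b n) + cmod (c n) + cmod (d n - inverse z)) * norm (KK z (-(n+1)) w)"
      by (rule mv_norm)
    finally show ?thesis by (simp add: KK_norm[OF z1])
  qed
  show "0 \<le> cmod (a n - z) + cmod (b n) + cmod (c n) + cmod (d n - inverse z)" for n by simp
  show "summable (\<lambda>k. cmod (a (n + int k) - z) + cmod (b (n + int k)) + cmod (c (n + int k)) + cmod (d (n + int k) - inverse z))" for n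
    using zs unfolding zsum_def by blast
qed

lemma sys_top:
  assumes z1: "cmod z = 1"
    and zs: "zsum (\<lambda>n. cmod (a n - z) + cmod (b n) + cmod (c n) + cmod (d n - inverse z))"
  shows "\<exists>!f. solves (\<lambda>n. mv (a n) (b n) (c n) (d n)) f \<and> psi_cond z f"
    and "\<exists>!f. solves (\<lambda>n. mv (a n) (b n) (c n) (d n)) f \<and> psibar_cond z f"
proof -
  have z0: "z \<noteq> 0" using z1 by auto
  define H where "H f = (\<lambda>n. KK z n (f n))" for f :: "int \<Rightarrow> complex \<times> complex"
  define G where "G x = (\<lambda>n. KK z (-n) (x n))" for x :: "int \<Rightarrow> complex \<times> complex"
  have HG: "H (G x) = x" for x
    unfolding H_def G_def using KK_inv[OF z0, of "-n" for n] by (simp add: fun_eq_iff)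
  have GH: "G (H f) = f" for f
    unfolding H_def G_def using KK_inv[OF z0] by (simp add: fun_eq_iff)
  have solv: "solves (\<lambda>n. mv (a n) (b n) (c n) (d n)) f \<longleftrightarrow>
     (\<forall>n. H f n = KK z n (mv (a n) (b n) (c n) (d n) (KK z (-(n+1)) (H f (n+1)))))" for f
  proof -
    have "KK z (-(n+1)) (H f (n+1)) = f (n+1)" for n
      unfolding H_def using KK_inv[OF z0, of "n+1"] by simp
    moreover have "(KK z n v = KK z n w) \<longleftrightarrow> v = w" for n v w
      using KK_inv[OF z0, of n] by metis
    ultimately show ?thesis unfolding solves_def H_def by simp
  qed
  have un: "cmod (z powi n) = 1" for n using unimod_powi[OF z1] .
  have psi: "psi_cond z f \<longleftrightarrow> (H f \<longlongrightarrow> (0,1)) at_top" for f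
    unfolding psi_cond_def tendsto_Pair_iff H_def KK_def
    by (simp add: tendsto_unimod0[OF un] mult.commute)
  have psibar: "psibar_cond z f \<longleftrightarrow> (H f \<longlongrightarrow> (1,0)) at_top" for f
    unfolding psibar_cond_def tendsto_Pair_iff H_def KK_def
    by (simp add: tendsto_unimod0[OF un] tendsto_unimod0'[OF un] mult.commute)
  show "\<exists>!f. solves (\<lambda>n. mv (a n) (b n) (c n) (d n)) f \<and> psi_cond z f"
    by (rule ex1_transfer[OF sys_top_gen[OF z1 zs, of "(0,1)"], of _ H G]) (use solv psi HG GH in auto)
  show "\<exists>!f. solves (\<lambda>n. mv (a n) (b n) (c n) (d n)) f \<and> psibar_cond z f"
    by (rule ex1_transfer[OF sys_top_gen[OF z1 zs, of "(1,0)"], of _ H G]) (use solv psibar HG GH in auto)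
qed


lemma zsum_reflect: "zsum \<beta> \<Longrightarrow> zsum (\<lambda>m. \<beta> (-m-1))"
  unfolding zsum_def
proof (intro conjI allI)
  fix n assume h: "(\<forall>n. summable (\<lambda>k. \<beta> (n + int k))) \<and> (\<forall>n. summable (\<lambda>k. \<beta> (n - int k)))"
  show "summable (\<lambda>k. \<beta> (- (n + int k) - 1))" using h[THEN conjunct2, rule_format, of "-n-1"] by (simp add: algebra_simps)
  show "summable (\<lambda>k. \<beta> (- (n - int k) - 1))" using h[THEN conjunct1, rule_format, of "-n-1"] by (simp add: algebra_simps)
qed

lemma filterlim_at_bot_mirror_int: "(LIM x at_bot. f x :> F) \<longleftrightarrow> (LIM x at_top. f (-x::int) :> F)"
  unfolding filterlim_def at_bot_mirror filtermap_filtermap ..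

lemma powi_neg_inv: "(z::complex) powi (-m) = (inverse z) powi m"
  by (simp only: power_int_minus power_int_inverse)

lemma sys_all:
  assumes z1: "cmod z = 1"
    and inv1: "\<And>n w. mv (a n) (b n) (c n) (d n) (mv (a' n) (b' n) (c' n) (d' n) w) = w"
    and inv2: "\<And>n w. mv (a' n) (b' n) (c' n) (d' n) (mv (a n) (b n) (c n) (d n) w) = w"
    and zs: "zsum (\<lambda>n. cmod (a n - z) + cmod (b n) + cmod (c n) + cmod (d n - inverse z))"
    and zs': "zsum (\<lambda>n. cmod (a' n - inverse z) + cmod (b' n) + cmod (c' n) + cmod (d' n - z))"
  shows "\<exists>!f. solves (\<lambda>n. mv (a n) (b n) (c n) (d n)) f \<and> psi_cond z f"
    and "\<exists>!f. solves (\<lambda>n. mv (a n) (b n) (c n) (d n)) f \<and> psibar_cond z f"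
    and "\<exists>!f. solves (\<lambda>n. mv (a n) (b n) (c n) (d n)) f \<and> phi_cond z f"
    and "\<exists>!f. solves (\<lambda>n. mv (a n) (b n) (c n) (d n)) f \<and> phibar_cond z f"
proof -
  show "\<exists>!f. solves (\<lambda>n. mv (a n) (b n) (c n) (d n)) f \<and> psi_cond z f"
    and "\<exists>!f. solves (\<lambda>n. mv (a n) (b n) (c n) (d n)) f \<and> psibar_cond z f"
    using sys_top[OF z1 zs] by auto
  have z1': "cmod (inverse z) = 1" using z1 by (simp add: norm_inverse)
  have zs'': "zsum (\<lambda>m. cmod (a' (-m-1) - inverse z) + cmod (b' (-m-1)) + cmod (c' (-m-1)) + cmod (d' (-m-1) - inverse (inverse z)))"
    using zsum_reflect[OF zs'] by simp
  note st = sys_top[OF z1' zs'']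
  define H where "H f = (\<lambda>m::int. f (-m))" for f :: "int \<Rightarrow> complex \<times> complex"
  have HH: "H (H f) = f" for f unfolding H_def by simp
  have solv: "solves (\<lambda>n. mv (a n) (b n) (c n) (d n)) f \<longleftrightarrow>
     solves (\<lambda>m. mv (a' (-m-1)) (b' (-m-1)) (c' (-m-1)) (d' (-m-1))) (H f)" for f
  proof -
    have "solves (\<lambda>n. mv (a n) (b n) (c n) (d n)) f \<longleftrightarrow>
          (\<forall>n. f (n+1) = mv (a' n) (b' n) (c' n) (d' n) (f n))"
      unfolding solves_def using inv1 inv2 by metis
    also have "\<dots> \<longleftrightarrow> (\<forall>m. f (-m) = mv (a' (-m-1)) (b' (-m-1)) (c' (-m-1)) (d' (-m-1)) (f (-m-1)))"
    proof
      assume h: "\<forall>n. f (n+1) = mv (a' n) (b' n) (c' n) (d' n) (f n)"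
      show "\<forall>m. f (-m) = mv (a' (-m-1)) (b' (-m-1)) (c' (-m-1)) (d' (-m-1)) (f (-m-1))"
      proof
        fix m show "f (-m) = mv (a' (-m-1)) (b' (-m-1)) (c' (-m-1)) (d' (-m-1)) (f (-m-1))"
          using h[rule_format, of "-m-1"] by simp
      qed
    next
      assume h: "\<forall>m. f (-m) = mv (a' (-m-1)) (b' (-m-1)) (c' (-m-1)) (d' (-m-1)) (f (-m-1))"
      show "\<forall>n. f (n+1) = mv (a' n) (b' n) (c' n) (d' n) (f n)"
      proof
        fix n show "f (n+1) = mv (a' n) (b' n) (c' n) (d' n) (f n)"
          using h[rule_format, of "-n-1"] by (simp add: add.commute)
      qed
    qed
    also have "\<dots> \<longleftrightarrow> solves (\<lambda>m. mv (a' (-m-1)) (b' (-m-1)) (c' (-m-1)) (d' (-m-1))) (H f)"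
      unfolding solves_def H_def by (simp add: algebra_simps)
    finally show ?thesis .
  qed
  have phi: "phi_cond z f \<longleftrightarrow> psibar_cond (inverse z) (H f)" for f
    unfolding phi_cond_def psibar_cond_def H_def
    by (simp add: filterlim_at_bot_mirror_int powi_neg_inv)
  have phibar: "phibar_cond z f \<longleftrightarrow> psi_cond (inverse z) (H f)" for f
    unfolding phibar_cond_def psi_cond_def H_def
    by (simp add: filterlim_at_bot_mirror_int powi_neg_inv)
  show "\<exists>!f. solves (\<lambda>n. mv (a n) (b n) (c n) (d n)) f \<and> phi_cond z f"
    by (rule ex1_transfer[OF st(2), of _ H H]) (use solv phi HH in auto)
  show "\<exists>!f. solves (\<lambda>n. mv (a n) (b n) (c n) (d n)) f \<and> phibar_cond z f"
    by (rule ex1_transfer[OF st(1), of _ H H]) (use solv phibar HH in auto)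
qed



lemma int_shift_bot: "filterlim (\<lambda>m::int. m + c) at_bot at_bot"
  unfolding filterlim_at_bot eventually_at_bot_linorder
proof (intro allI)
  fix Z :: int show "\<exists>N. \<forall>n\<le>N. n + c \<le> Z" by (rule exI[of _ "Z - c"]) auto
qed

lemma int_shift_top: "filterlim (\<lambda>m::int. m + c) at_top at_top"
  unfolding filterlim_at_top eventually_at_top_linorder
proof (intro allI)
  fix Z :: int show "\<exists>N. \<forall>n\<ge>N. Z \<le> n + c" by (rule exI[of _ "Z - c"]) auto
qed

lemma prod_facts:
  fixes a :: "int \<Rightarrow> complex"
  assumes zs: "zsum (\<lambda>j. cmod (a j))" and nz: "\<And>j. 1 + a j \<noteq> 0"
  shows "\<exists>x. (\<forall>n. ((\<lambda>m. \<Prod>j\<in>{m..n}. 1 + a j) \<longlongrightarrow> x n) at_bot) \<and>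
     (\<forall>n. x n = x (n-1) * (1 + a n)) \<and> (x \<longlongrightarrow> 1) at_bot \<and> (\<forall>n. x n \<noteq> 0) \<and>
     (\<exists>L. L \<noteq> 0 \<and> (x \<longlongrightarrow> L) at_top)"
proof -
  have "\<exists>!y. (\<forall>m. y m = (\<lambda>m w. (1 + a (-m)) * w) m (y (m+1))) \<and> (y \<longlongrightarrow> 1) at_top"
  proof (rule gen_sol)
    show "bounded_linear (\<lambda>w. (1 + a (-m)) * w)" for m by (rule bounded_linear_mult_right)
    show "norm ((1 + a (-m)) * w - w) \<le> cmod (a (-m)) * norm w" for m w
      by (simp add: algebra_simps norm_mult)
    show "0 \<le> cmod (a (-m))" for m by simp
    show "summable (\<lambda>k. cmod (a (- (n + int k))))" for n
    proof -
      have "summable (\<lambda>k. cmod (a (-n - int k)))" using zs unfolding zsum_def by blast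
      then show ?thesis by simp
    qed
  qed
  then obtain y where y: "\<forall>m. y m = (1 + a (-m)) * y (m+1)" "(y \<longlongrightarrow> 1) at_top" by auto
  define x where "x n = y (-n)" for n
  have rec: "x n = x (n-1) * (1 + a n)" for n
    using y(1)[rule_format, of "-n"] unfolding x_def by (simp add: mult.commute)
  have xbot: "(x \<longlongrightarrow> 1) at_bot"
    unfolding x_def filterlim_at_bot_mirror_int using y(2) by simp
  have xnz: "x n \<noteq> 0" for n
  proof
    assume x0: "x n = 0"
    have xk0: "x (n - int k) = 0" for k
    proof (induction k)
      case 0 then show ?case using x0 by simp
    next
      case (Suc k)
      have "x (n - int k) = x (n - int (Suc k)) * (1 + a (n - int k))"
        using rec[of "n - int k"] by (simp add: algebra_simps)
      then show ?case using Suc nz by simp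
    qed
    then have "eventually (\<lambda>m. x m = 0) at_bot"
      unfolding eventually_at_bot_linorder
    proof (intro exI[of _ n] allI impI)
      fix m assume "m \<le> n"
      then have "m = n - int (nat (n - m))" by simp
      then show "x m = 0" using xk0[of "nat (n - m)"] by simp
    qed
    then have "(x \<longlongrightarrow> 0) at_bot" by (rule tendsto_eventually)
    with xbot show False using tendsto_unique[OF trivial_limit_at_bot_linorder] by fastforce
  qed
  have prodeq: "(\<Prod>j\<in>{m..m + int k}. 1 + a j) = x (m + int k) / x (m - 1)" for m k
  proof (induction k)
    case 0 then show ?case using rec[of m] xnz[of "m-1"] by simp
  next
    case (Suc k)
    have "{m..m + int (Suc k)} = insert (m + int k + 1) {m..m + int k}" by auto
    then have "(\<Prod>j\<in>{m..m + int (Suc k)}. 1 + a j) = (1 + a (m + int k + 1)) * (\<Prod>j\<in>{m..m + int k}. 1 + a j)"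
      by simp
    also have "\<dots> = (1 + a (m + int k + 1)) * x (m + int k) / x (m - 1)" using Suc by simp
    also have "\<dots> = x (m + int (Suc k)) / x (m - 1)" using rec[of "m + int k + 1"] by (simp add: algebra_simps)
    finally show ?case .
  qed
  have lim1: "((\<lambda>m. \<Prod>j\<in>{m..n}. 1 + a j) \<longlongrightarrow> x n) at_bot" for n
  proof -
    have xm1: "((\<lambda>m. x (m + (-1))) \<longlongrightarrow> 1) at_bot" by (rule filterlim_compose[OF xbot int_shift_bot])
    have "((\<lambda>m. x n / x (m + (-1))) \<longlongrightarrow> x n / 1) at_bot" by (intro tendsto_intros xm1) simp
    then have l: "((\<lambda>m. x n / x (m - 1)) \<longlongrightarrow> x n) at_bot" by simp
    have ev: "eventually (\<lambda>m. x n / x (m - 1) = (\<Prod>j\<in>{m..n}. 1 + a j)) at_bot"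
      unfolding eventually_at_bot_linorder
    proof (intro exI[of _ n] allI impI)
      fix m assume "m \<le> n"
      then have "n = m + int (nat (n - m))" by simp
      then show "x n / x (m - 1) = (\<Prod>j\<in>{m..n}. 1 + a j)" using prodeq[of m "nat (n - m)"] by metis
    qed
    show ?thesis using tendsto_cong[OF ev] l by simp
  qed
  have top: "\<exists>L. L \<noteq> 0 \<and> (x \<longlongrightarrow> L) at_top"
  proof -
    define g where "g i = 1 + a (int i + 1)" for i :: nat
    have "summable (\<lambda>i. norm (g i - 1))"
      using zs unfolding zsum_def g_def by (simp add: add.commute)
    then have cp: "convergent_prod g"
      by (intro abs_convergent_prod_imp_convergent_prod summable_imp_abs_convergent_prod)
    have gnz: "g i \<noteq> 0" for i unfolding g_def by (rule nz)
    have xk: "x (int k) = x 0 * prod g {..<k}" for k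
    proof (induction k)
      case 0 then show ?case by simp
    next
      case (Suc k)
      have "x (int (Suc k)) = x (int k) * g k" using rec[of "int (Suc k)"] unfolding g_def by (simp add: add.commute)
      then show ?case using Suc by (simp add: algebra_simps)
    qed
    have "(\<lambda>k. prod g {..k}) \<longlonglongrightarrow> prodinf g" by (rule convergent_prod_LIMSEQ[OF cp])
    then have "(\<lambda>k. prod g {..<Suc k}) \<longlonglongrightarrow> prodinf g" by (simp add: lessThan_Suc_atMost)
    then have "(\<lambda>k. prod g {..<k}) \<longlonglongrightarrow> prodinf g" by (rule LIMSEQ_imp_Suc)
    then have "(\<lambda>k. x (int k)) \<longlonglongrightarrow> x 0 * prodinf g" unfolding xk by (intro tendsto_intros)
    then have "(x \<longlongrightarrow> x 0 * prodinf g) at_top" by (rule filterlim_int_of_nat_at_topD)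
    moreover have "x 0 * prodinf g \<noteq> 0" using xnz[of 0] prodinf_nonzero[OF cp gnz] by simp
    ultimately show ?thesis by blast
  qed
  show ?thesis using lim1 rec xbot xnz top by blast
qed



lemma zsumI:
  assumes p: "summable (\<lambda>k. \<beta> (int k))" and m: "summable (\<lambda>k. \<beta> (- int k))"
  shows "zsum \<beta>"
  unfolding zsum_def
proof (intro conjI allI)
  fix n :: int
  show "summable (\<lambda>k. \<beta> (n + int k))"
  proof (cases "n \<ge> 0")
    case True
    have "summable (\<lambda>k. \<beta> (int (k + nat n)))" using summable_iff_shift[of "\<lambda>k. \<beta> (int k)" "nat n"] p by simp
    then show ?thesis using True by (simp add: add.commute)
  next
    case False
    have "summable (\<lambda>k. (\<lambda>k. \<beta> (n + int k)) (k + nat (-n)))" using p False by simp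
    then show ?thesis by (rule summable_iff_shift[THEN iffD1])
  qed
  show "summable (\<lambda>k. \<beta> (n - int k))"
  proof (cases "n \<le> 0")
    case True
    have "summable (\<lambda>k. \<beta> (- int (k + nat (-n))))" using summable_iff_shift[of "\<lambda>k. \<beta> (- int k)" "nat (-n)"] m by simp
    then show ?thesis using True by (simp add: algebra_simps)
  next
    case False
    have "summable (\<lambda>k. (\<lambda>k. \<beta> (n - int k)) (k + nat n))" using m False by simp
    then show ?thesis by (rule summable_iff_shift[THEN iffD1])
  qed
qed

lemma zsum_add: "zsum a \<Longrightarrow> zsum b \<Longrightarrow> zsum (\<lambda>n. a n + b n)"
  unfolding zsum_def by (auto intro: summable_add)

lemma zsum_comp:
  assumes "zsum a" and "\<And>n. \<bar>b n\<bar> \<le> C * a n"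
  shows "zsum b"
  unfolding zsum_def
proof (intro conjI allI)
  fix n
  have "summable (\<lambda>k. C * a (n + int k))" using assms(1) unfolding zsum_def by (simp add: summable_mult)
  then show "summable (\<lambda>k. b (n + int k))"
    by (rule summable_comparison_test[rotated]) (use assms(2) in auto)
  have "summable (\<lambda>k. C * a (n - int k))" using assms(1) unfolding zsum_def by (simp add: summable_mult)
  then show "summable (\<lambda>k. b (n - int k))"
    by (rule summable_comparison_test[rotated]) (use assms(2) in auto)
qed

lemma zsum_shift: "zsum a \<Longrightarrow> zsum (\<lambda>n. a (n + 1))"
  unfolding zsum_def
proof (intro conjI allI)
  fix n assume h: "(\<forall>n. summable (\<lambda>k. a (n + int k))) \<and> (\<forall>n. summable (\<lambda>k. a (n - int k)))"
  show "summable (\<lambda>k. a (n + int k + 1))" using h[THEN conjunct1, rule_format, of "n+1"] by (simp add: algebra_simps)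
  show "summable (\<lambda>k. a (n - int k + 1))" using h[THEN conjunct2, rule_format, of "n+1"] by (simp add: algebra_simps)
qed

lemma zsum_bounded:
  assumes "zsum a" shows "\<exists>C. \<forall>n. \<bar>a n\<bar> \<le> C"
proof -
  have "(\<lambda>k. a (0 + int k)) \<longlonglongrightarrow> 0" using assms unfolding zsum_def by (blast intro: summable_LIMSEQ_zero)
  then have "Bseq (\<lambda>k. a (int k))" by (simp add: convergent_imp_Bseq convergentI)
  then obtain C1 where C1: "\<And>k. \<bar>a (int k)\<bar> \<le> C1" unfolding Bseq_def real_norm_def by blast
  have "(\<lambda>k. a (0 - int k)) \<longlonglongrightarrow> 0" using assms unfolding zsum_def by (blast intro: summable_LIMSEQ_zero)
  then have "Bseq (\<lambda>k. a (- int k))" by (simp add: convergent_imp_Bseq convergentI)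
  then obtain C2 where C2: "\<And>k. \<bar>a (- int k)\<bar> \<le> C2" unfolding Bseq_def real_norm_def by blast
  have "\<bar>a n\<bar> \<le> max C1 C2" for n
  proof (cases "n \<ge> 0")
    case True then show ?thesis using C1[of "nat n"] by simp
  next
    case False then show ?thesis using C2[of "nat (-n)"] by simp
  qed
  then show ?thesis by blast
qed

lemma rd_top:
  assumes "rapid_decay q"
  shows "summable (\<lambda>k. cmod (q (int k)))" and "(q \<longlongrightarrow> 0) at_top"
proof -
  have l2: "((\<lambda>n. real_of_int \<bar>n\<bar> ^ 2 * cmod (q n)) \<longlongrightarrow> 0) at_top"
    and l0: "((\<lambda>n. real_of_int \<bar>n\<bar> ^ 0 * cmod (q n)) \<longlongrightarrow> 0) at_top"
    using assms unfolding rapid_decay_def by blast+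
  from l0 show "(q \<longlongrightarrow> 0) at_top" by (simp add: tendsto_norm_zero_iff)
  have "(\<lambda>k. real_of_int \<bar>int k\<bar> ^ 2 * cmod (q (int k))) \<longlonglongrightarrow> 0"
    by (rule filterlim_compose[OF l2 filterlim_int_sequentially])
  then have "eventually (\<lambda>k. real_of_int \<bar>int k\<bar> ^ 2 * cmod (q (int k)) < 1) sequentially"
    by (rule order_tendstoD) simp
  then have "eventually (\<lambda>k. norm (cmod (q (int k))) \<le> inverse (real k ^ 2)) sequentially"
    using eventually_gt_at_top[of 0]
  proof eventually_elim
    case (elim k)
    then have "real k ^ 2 * cmod (q (int k)) \<le> 1" by simp
    moreover have "real k ^ 2 > 0" using elim by simp
    ultimately show ?case by (simp add: field_simps)
  qed
  then show "summable (\<lambda>k. cmod (q (int k)))"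
    by (rule summable_comparison_test_ev) (rule inverse_power_summable, simp)
qed

lemma rd_mirror: "rapid_decay q \<Longrightarrow> rapid_decay (\<lambda>n. q (-n))"
  unfolding rapid_decay_def filterlim_at_bot_mirror_int
proof (intro allI conjI)
  fix k :: nat
  assume h: "\<forall>k. ((\<lambda>n. real_of_int \<bar>n\<bar> ^ k * cmod (q n)) \<longlongrightarrow> 0) at_top \<and>
          ((\<lambda>x. real_of_int \<bar>- x\<bar> ^ k * cmod (q (- x))) \<longlongrightarrow> 0) at_top"
  show "((\<lambda>n. real_of_int \<bar>n\<bar> ^ k * cmod (q (- n))) \<longlongrightarrow> 0) at_top" using h by simp
  show "((\<lambda>x. real_of_int \<bar>- x\<bar> ^ k * cmod (q (- (- x)))) \<longlongrightarrow> 0) at_top" using h by simp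
qed

lemma rd_facts:
  assumes "rapid_decay q"
  shows "zsum (\<lambda>n. cmod (q n))" and "(q \<longlongrightarrow> 0) at_top" and "(q \<longlongrightarrow> 0) at_bot"
proof -
  show "zsum (\<lambda>n. cmod (q n))"
    using rd_top(1)[OF assms] rd_top(1)[OF rd_mirror[OF assms]] by (intro zsumI) auto
  show "(q \<longlongrightarrow> 0) at_top" using rd_top(2)[OF assms] .
  show "(q \<longlongrightarrow> 0) at_bot" using rd_top(2)[OF rd_mirror[OF assms]]
    unfolding filterlim_at_bot_mirror_int .
qed

lemma bounded_two_sided:
  fixes h :: "int \<Rightarrow> complex"
  assumes t: "(h \<longlongrightarrow> A) at_top" and b: "(h \<longlongrightarrow> B) at_bot"
  shows "\<exists>C. \<forall>n. cmod (h n) \<le> C"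
proof -
  have "eventually (\<lambda>n. dist (h n) A < 1) at_top" using t by (rule tendstoD) simp
  then obtain N1 where N1: "\<And>n. n \<ge> N1 \<Longrightarrow> dist (h n) A < 1" unfolding eventually_at_top_linorder by blast
  have "eventually (\<lambda>n. dist (h n) B < 1) at_bot" using b by (rule tendstoD) simp
  then obtain N2 where N2: "\<And>n. n \<le> N2 \<Longrightarrow> dist (h n) B < 1" unfolding eventually_at_bot_linorder by blast
  define M where "M = Max ((\<lambda>n. cmod (h n)) ` {N2..N1})"
  have "cmod (h n) \<le> max (cmod A + 1) (max (cmod B + 1) M)" for n
  proof -
    consider "n \<ge> N1" | "n \<le> N2" | "N2 \<le> n \<and> n \<le> N1" by linarith
    then show ?thesis
    proof cases
      case 1
      then have "cmod (h n) \<le> cmod A + 1" using N1[OF 1] norm_triangle_sub[of "h n" A] by (simp add: dist_norm)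
      then show ?thesis by linarith
    next
      case 2
      then have "cmod (h n) \<le> cmod B + 1" using N2[OF 2] norm_triangle_sub[of "h n" B] by (simp add: dist_norm)
      then show ?thesis by linarith
    next
      case 3
      then have "cmod (h n) \<le> M" unfolding M_def by (intro Max_ge) auto
      then show ?thesis by linarith
    qed
  qed
  then show ?thesis by blast
qed


lemma prod_Lim:
  fixes a :: "int \<Rightarrow> complex"
  assumes zs: "zsum (\<lambda>j. cmod (a j))" and nz: "\<And>j. 1 + a j \<noteq> 0"
    and P: "P = (\<lambda>n. Lim at_bot (\<lambda>m. \<Prod>j\<in>{m..n}. 1 + a j))"
  shows "\<And>n. P n = P (n-1) * (1 + a n)" "(P \<longlongrightarrow> 1) at_bot" "\<And>n. P n \<noteq> 0"
    "(P \<longlongrightarrow> Lim at_top P) at_top" "Lim at_top P \<noteq> 0"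
proof -
  obtain x where x: "\<forall>n. ((\<lambda>m. \<Prod>j\<in>{m..n}. 1 + a j) \<longlongrightarrow> x n) at_bot"
     "\<forall>n. x n = x (n-1) * (1 + a n)" "(x \<longlongrightarrow> 1) at_bot" "\<forall>n. x n \<noteq> 0"
     and L: "\<exists>L. L \<noteq> 0 \<and> (x \<longlongrightarrow> L) at_top"
    using prod_facts[OF zs nz] by blast
  have Px: "P = x" unfolding P
    using x(1) by (auto simp: fun_eq_iff intro!: tendsto_Lim trivial_limit_at_bot_linorder)
  obtain L where L: "L \<noteq> 0" "(x \<longlongrightarrow> L) at_top" using L by blast
  have LL: "Lim at_top x = L" by (rule tendsto_Lim[OF trivial_limit_at_top_linorder L(2)])
  show "\<And>n. P n = P (n-1) * (1 + a n)" using x(2) unfolding Px by blast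
  show "(P \<longlongrightarrow> 1) at_bot" using x(3) unfolding Px .
  show "\<And>n. P n \<noteq> 0" using x(4) unfolding Px by blast
  show "(P \<longlongrightarrow> Lim at_top P) at_top" using L(2) unfolding Px LL .
  show "Lim at_top P \<noteq> 0" using L(1) unfolding Px LL .
qed

lemma DE_facts:
  assumes rq: "rapid_decay q" and rr: "rapid_decay r"
    and nz1: "\<And>j. 1 - q j * r j \<noteq> 0" and nz2: "\<And>j. 1 + q j * r (j + 1) \<noteq> 0"
  shows "\<And>n. Dn q r n = Dn q r (n-1) * (1 - q n * r n)" "(Dn q r \<longlongrightarrow> 1) at_bot" "\<And>n. Dn q r n \<noteq> 0"
    "(Dn q r \<longlongrightarrow> Dinf q r) at_top" "Dinf q r \<noteq> 0"
    "\<And>n. En q r n = En q r (n-1) * (1 + q n * r (n+1))" "(En q r \<longlongrightarrow> 1) at_bot" "\<And>n. En q r n \<noteq> 0"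
    "(En q r \<longlongrightarrow> Einf q r) at_top" "Einf q r \<noteq> 0"
proof -
  note fq = rd_facts[OF rq] and fr = rd_facts[OF rr]
  obtain Cr where Cr: "\<And>n. \<bar>cmod (r n)\<bar> \<le> Cr" using zsum_bounded[OF fr(1)] by blast
  have z1: "zsum (\<lambda>j. cmod (- (q j * r j)))"
  proof (rule zsum_comp[OF fq(1), of _ Cr])
    fix n show "\<bar>cmod (- (q n * r n))\<bar> \<le> Cr * cmod (q n)"
      using mult_left_mono[OF _ norm_ge_zero[of "q n"], of "cmod (r n)" Cr] Cr[of n] by (simp add: norm_mult mult.commute)
  qed
  have z2: "zsum (\<lambda>j. cmod (q j * r (j+1)))"
  proof (rule zsum_comp[OF fq(1), of _ Cr])
    fix n show "\<bar>cmod (q n * r (n+1))\<bar> \<le> Cr * cmod (q n)"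
      using mult_left_mono[OF _ norm_ge_zero[of "q n"], of "cmod (r (n+1))" Cr] Cr[of "n+1"] by (simp add: norm_mult mult.commute)
  qed
  have PD: "Dn q r = (\<lambda>n. Lim at_bot (\<lambda>m. \<Prod>j\<in>{m..n}. 1 + - (q j * r j)))"
    by (simp add: fun_eq_iff Dn_def)
  have PE: "En q r = (\<lambda>n. Lim at_bot (\<lambda>m. \<Prod>j\<in>{m..n}. 1 + q j * r (j+1)))"
    by (simp add: fun_eq_iff En_def)
  have nz1': "1 + - (q j * r j) \<noteq> 0" for j using nz1[of j] by simp
  note D = prod_Lim[OF z1 nz1' PD] and E = prod_Lim[OF z2 nz2 PE]
  have DI: "Dinf q r = Lim at_top (Dn q r)" unfolding Dinf_def by (simp add: fun_eq_iff)
  have EI: "Einf q r = Lim at_top (En q r)" unfolding Einf_def by (simp add: fun_eq_iff)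
  show "Dn q r n = Dn q r (n-1) * (1 - q n * r n)" for n
  proof -
    have "Dn q r n = Dn q r (n-1) * (1 + - (q n * r n))" by (rule D(1))
    then show ?thesis by simp
  qed
  show "(Dn q r \<longlongrightarrow> 1) at_bot" by (rule D(2))
  show "Dn q r n \<noteq> 0" for n by (rule D(3))
  show "(Dn q r \<longlongrightarrow> Dinf q r) at_top" unfolding DI by (rule D(4))
  show "Dinf q r \<noteq> 0" unfolding DI by (rule D(5))
  show "En q r n = En q r (n-1) * (1 + q n * r (n+1))" for n by (rule E(1))
  show "(En q r \<longlongrightarrow> 1) at_bot" by (rule E(2))
  show "En q r n \<noteq> 0" for n by (rule E(3))
  show "(En q r \<longlongrightarrow> Einf q r) at_top" unfolding EI by (rule E(4))
  show "Einf q r \<noteq> 0" unfolding EI by (rule E(5))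
qed



lemma zsum_cong: "zsum a \<Longrightarrow> (\<And>n. a n = b n) \<Longrightarrow> zsum b"
  by (metis ext)

lemma norm3_le:
  fixes f x y :: complex
  assumes "cmod x \<le> A" "cmod y \<le> B"
  shows "cmod (f * x * y) \<le> (A * B) * cmod f"
proof -
  have A0: "0 \<le> A" using assms(1) norm_ge_zero order_trans by blast
  have "cmod (f * x * y) = cmod f * (cmod x * cmod y)" by (simp add: norm_mult)
  also have "\<dots> \<le> cmod f * (A * B)"
    by (intro mult_left_mono mult_mono assms) (use A0 in auto)
  finally show ?thesis by (simp add: mult.commute)
qed

lemma norm2_le:
  fixes f x :: complex
  assumes "cmod x \<le> A"
  shows "cmod (f * x) \<le> A * cmod f"
  using mult_left_mono[OF assms norm_ge_zero[of f]] by (simp add: norm_mult mult.commute)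

lemma zsum_norm_bd:
  assumes "zsum (\<lambda>n. cmod (f n))" "\<And>n. cmod (g n) \<le> C * cmod (f n)"
  shows "zsum (\<lambda>n. cmod (g n))"
  by (rule zsum_comp[OF assms(1)]) (use assms(2) in simp)

lemma Qstep_mv: "Qstep q r z = (\<lambda>n. mv z ((z - inverse z) * q n) (z * r n) (inverse z + (z - inverse z) * q n * r n))"
  by (simp add: fun_eq_iff Qstep_def mv_def mult.assoc)

lemma Ustep_mv: "Ustep a b z = (\<lambda>n. mv z (z * a n) (inverse z * b n) (inverse z))"
  by (simp add: fun_eq_iff Ustep_def mv_def mult.assoc)

lemma Q_jost:
  assumes z1: "cmod z = 1" and zq: "zsum (\<lambda>n. cmod (q n))" and zr: "zsum (\<lambda>n. cmod (r n))"
  shows "\<exists>!f. solves (Qstep q r z) f \<and> psi_cond z f"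
    and "\<exists>!f. solves (Qstep q r z) f \<and> psibar_cond z f"
    and "\<exists>!f. solves (Qstep q r z) f \<and> phi_cond z f"
    and "\<exists>!f. solves (Qstep q r z) f \<and> phibar_cond z f"
proof -
  have z0: "z \<noteq> 0" using z1 by auto
  obtain Cr where Cr: "\<And>n. \<bar>cmod (r n)\<bar> \<le> Cr" using zsum_bounded[OF zr] by blast
  define k where "k = z - inverse z"
  have zqr: "zsum (\<lambda>n. cmod (k * q n * r n))"
  proof (rule zsum_norm_bd[OF zq, of _ "cmod k * Cr"])
    fix n
    have "cmod (k * q n * r n) = cmod (q n * k * r n)" by (simp add: mult_ac)
    also have "\<dots> \<le> (cmod k * Cr) * cmod (q n)" by (rule norm3_le) (use Cr[of n] in auto)
    finally show "cmod (k * q n * r n) \<le> cmod k * Cr * cmod (q n)" .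
  qed
  have zkq: "zsum (\<lambda>n. cmod (k * q n))"
    by (rule zsum_norm_bd[OF zq, of _ "cmod k"]) (simp add: norm_mult)
  have zzr: "zsum (\<lambda>n. cmod (z * r n))"
    by (rule zsum_norm_bd[OF zr, of _ "cmod z"]) (simp add: norm_mult)
  have zmkq: "zsum (\<lambda>n. cmod (- (k * q n)))" using zkq by simp
  have zmzr: "zsum (\<lambda>n. cmod (- (z * r n)))" using zzr by simp
  have zs: "zsum (\<lambda>n. cmod (z - z) + cmod (k * q n) + cmod (z * r n) + cmod (inverse z + k * q n * r n - inverse z))"
    using zsum_add[OF zsum_add[OF zkq zzr] zqr] by (simp add: add.assoc)
  have zs': "zsum (\<lambda>n. cmod ((inverse z + k * q n * r n) - inverse z) + cmod (- (k * q n)) + cmod (- (z * r n)) + cmod (z - z))"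
    using zsum_add[OF zsum_add[OF zqr zmkq] zmzr] by (simp add: add.assoc)
  have inv1: "mv z (k * q n) (z * r n) (inverse z + k * q n * r n)
      (mv (inverse z + k * q n * r n) (- (k * q n)) (- (z * r n)) z w) = w" for n w
    unfolding mv_comp k_def using z0 by (simp add: field_simps mv_def)
  have inv2: "mv (inverse z + k * q n * r n) (- (k * q n)) (- (z * r n)) z
      (mv z (k * q n) (z * r n) (inverse z + k * q n * r n) w) = w" for n w
    unfolding mv_comp k_def using z0 by (simp add: field_simps mv_def)
  note S = sys_all[where a="\<lambda>n. z" and b="\<lambda>n. k * q n" and c="\<lambda>n. z * r n" and d="\<lambda>n. inverse z + k * q n * r n"
     and a'="\<lambda>n. inverse z + k * q n * r n" and b'="\<lambda>n. - (k * q n)" and c'="\<lambda>n. - (z * r n)" and d'="\<lambda>n. z",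
     OF z1 inv1 inv2 zs zs']
  have QQ: "Qstep q r z = (\<lambda>n. mv z (k * q n) (z * r n) (inverse z + k * q n * r n))"
    unfolding Qstep_mv k_def ..
  show "\<exists>!f. solves (Qstep q r z) f \<and> psi_cond z f"
    and "\<exists>!f. solves (Qstep q r z) f \<and> psibar_cond z f"
    and "\<exists>!f. solves (Qstep q r z) f \<and> phi_cond z f"
    and "\<exists>!f. solves (Qstep q r z) f \<and> phibar_cond z f"
    unfolding QQ using S by auto
qed

lemma mv_eq_id: "A = 1 \<Longrightarrow> B = 0 \<Longrightarrow> C = 0 \<Longrightarrow> D = 1 \<Longrightarrow> mv A B C D w = w"
  by (simp add: mv_def)

lemma U_jost:
  assumes z1: "cmod z = 1" and za: "zsum (\<lambda>n. cmod (a n))" and zb: "zsum (\<lambda>n. cmod (b n))"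
    and dnz: "\<And>n. 1 - a n * b n \<noteq> 0" and dC: "\<And>n. cmod (inverse (1 - a n * b n)) \<le> C"
  shows "\<exists>!f. solves (Ustep a b z) f \<and> psi_cond z f"
    and "\<exists>!f. solves (Ustep a b z) f \<and> psibar_cond z f"
    and "\<exists>!f. solves (Ustep a b z) f \<and> phi_cond z f"
    and "\<exists>!f. solves (Ustep a b z) f \<and> phibar_cond z f"
proof -
  have z0: "z \<noteq> 0" using z1 by auto
  have zi: "z * inverse z = 1" using z0 by simp
  obtain Cb where Cb: "\<And>n. \<bar>cmod (b n)\<bar> \<le> Cb" using zsum_bounded[OF zb] by blast
  define e where "e n = inverse (1 - a n * b n)" for n
  have e1: "e n * (1 - a n * b n) = 1" for n unfolding e_def using dnz[of n] by simp
  have eC: "cmod (e n) \<le> C" for n unfolding e_def by (rule dC)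
  have zs: "zsum (\<lambda>n. cmod (z - z) + cmod (z * a n) + cmod (inverse z * b n) + cmod (inverse z - inverse z))"
    using zsum_add[OF za zb] by (simp add: norm_mult z1 norm_inverse)
  have t1: "zsum (\<lambda>n. cmod (inverse z * e n - inverse z))"
  proof (rule zsum_norm_bd[OF za, of _ "Cb * C"])
    fix n
    have "inverse z * e n - inverse z = a n * b n * (inverse z * e n)"
      using e1[of n] by algebra
    also have "cmod \<dots> \<le> (Cb * C) * cmod (a n)"
      by (rule norm3_le) (use Cb[of n] eC[of n] in \<open>auto simp: norm_mult norm_inverse z1\<close>)
    finally show "cmod (inverse z * e n - inverse z) \<le> Cb * C * cmod (a n)" .
  qed
  have t4: "zsum (\<lambda>n. cmod (z * e n - z))"
  proof (rule zsum_norm_bd[OF za, of _ "Cb * C"])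
    fix n
    have "z * e n - z = a n * b n * (z * e n)"
      using e1[of n] by algebra
    also have "cmod \<dots> \<le> (Cb * C) * cmod (a n)"
      by (rule norm3_le) (use Cb[of n] eC[of n] in \<open>auto simp: norm_mult z1\<close>)
    finally show "cmod (z * e n - z) \<le> Cb * C * cmod (a n)" .
  qed
  have t2: "zsum (\<lambda>n. cmod (- (z * a n) * e n))"
  proof (rule zsum_norm_bd[OF za, of _ C])
    fix n
    have "cmod (- (z * a n) * e n) = cmod (a n) * cmod (e n)" by (simp add: norm_mult z1)
    also have "\<dots> \<le> cmod (a n) * C" by (rule mult_left_mono[OF eC]) simp
    finally show "cmod (- (z * a n) * e n) \<le> C * cmod (a n)" by (simp add: mult.commute)
  qed
  have t3: "zsum (\<lambda>n. cmod (- (inverse z * b n) * e n))"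
  proof (rule zsum_norm_bd[OF zb, of _ C])
    fix n
    have "cmod (- (inverse z * b n) * e n) = cmod (b n) * cmod (e n)" by (simp add: norm_mult norm_inverse z1)
    also have "\<dots> \<le> cmod (b n) * C" by (rule mult_left_mono[OF eC]) simp
    finally show "cmod (- (inverse z * b n) * e n) \<le> C * cmod (b n)" by (simp add: mult.commute)
  qed
  have zs': "zsum (\<lambda>n. cmod (inverse z * e n - inverse z) + cmod (- (z * a n) * e n) + cmod (- (inverse z * b n) * e n) + cmod (z * e n - z))"
    using zsum_add[OF zsum_add[OF zsum_add[OF t1 t2] t3] t4] .
  have inv1: "mv z (z * a n) (inverse z * b n) (inverse z)
      (mv (inverse z * e n) (- (z * a n) * e n) (- (inverse z * b n) * e n) (z * e n) w) = w" for n w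
    unfolding mv_comp by (rule mv_eq_id) (use zi e1[of n] in algebra)+
  have inv2: "mv (inverse z * e n) (- (z * a n) * e n) (- (inverse z * b n) * e n) (z * e n)
     (mv z (z * a n) (inverse z * b n) (inverse z) w) = w" for n w
    unfolding mv_comp by (rule mv_eq_id) (use zi e1[of n] in algebra)+
  note S = sys_all[where a="\<lambda>n. z" and b="\<lambda>n. z * a n" and c="\<lambda>n. inverse z * b n" and d="\<lambda>n. inverse z"
     and a'="\<lambda>n. inverse z * e n" and b'="\<lambda>n. - (z * a n) * e n" and c'="\<lambda>n. - (inverse z * b n) * e n" and d'="\<lambda>n. z * e n",
     OF z1 inv1 inv2 zs zs']
  show "\<exists>!f. solves (Ustep a b z) f \<and> psi_cond z f"
    and "\<exists>!f. solves (Ustep a b z) f \<and> psibar_cond z f"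
    and "\<exists>!f. solves (Ustep a b z) f \<and> phi_cond z f"
    and "\<exists>!f. solves (Ustep a b z) f \<and> phibar_cond z f"
    unfolding Ustep_mv using S by auto
qed



lemma Gamma_step:
  assumes z: "z \<noteq> 0" and d: "Dn q r (n-1) \<noteq> 0" and e: "En q r (n-1) \<noteq> 0"
    and h1: "1 - q n * r n \<noteq> 0" and h2: "1 + q n * r (n+1) \<noteq> 0"
    and DR: "Dn q r n = Dn q r (n-1) * (1 - q n * r n)" and ER: "En q r n = En q r (n-1) * (1 + q n * r (n+1))"
  shows "Gamma q r z n (Ustep (useq q r) (vseq q r) z n w) = Qstep q r z n (Gamma q r z (n+1) w)"
proof -
  have i1: "z * inverse z = 1" "Dn q r (n-1) * inverse (Dn q r (n-1)) = 1" "En q r (n-1) * inverse (En q r (n-1)) = 1"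
    "(1 - q n * r n) * inverse (1 - q n * r n) = 1" "(1 + q n * r (n+1)) * inverse (1 + q n * r (n+1)) = 1"
    using z d e h1 h2 by auto
  show ?thesis
    unfolding Gamma_def Ustep_def Qstep_def useq_def vseq_def prod_eq_iff fst_conv snd_conv
    unfolding DR ER divide_inverse inverse_mult_distrib power_inverse[symmetric] add_diff_cancel_right'
    using i1 by algebra
qed


lemma Lambda_step:
  assumes z: "z \<noteq> 0" and d: "Dn q r (n-1) \<noteq> 0" and e: "En q r (n-1) \<noteq> 0"
    and h1: "1 - q n * r n \<noteq> 0" and h2: "1 + q n * r (n+1) \<noteq> 0" and h3: "1 - q (n+1) * r (n+1) \<noteq> 0"
    and DR: "Dn q r n = Dn q r (n-1) * (1 - q n * r n)" and ER: "En q r n = En q r (n-1) * (1 + q n * r (n+1))"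
    and DR1: "Dn q r (n+1) = Dn q r n * (1 - q (n+1) * r (n+1))"
  shows "Lambda q r n (Ustep (pseq q r) (sseq q r) z n w) = Qstep q r z n (Lambda q r (n+1) w)"
proof -
  have i1: "z * inverse z = 1" "Dn q r (n-1) * inverse (Dn q r (n-1)) = 1" "En q r (n-1) * inverse (En q r (n-1)) = 1"
    "(1 - q n * r n) * inverse (1 - q n * r n) = 1" "(1 + q n * r (n+1)) * inverse (1 + q n * r (n+1)) = 1"
    "(1 - q (n+1) * r (n+1)) * inverse (1 - q (n+1) * r (n+1)) = 1"
    using z d e h1 h2 h3 by auto
  show ?thesis
    unfolding Lambda_def Ustep_def Qstep_def pseq_def sseq_def prod_eq_iff fst_conv snd_conv add_diff_cancel_right'
    unfolding DR1 
    unfolding DR ER divide_inverse inverse_mult_distrib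
    using i1 by algebra
qed



lemma Qstep_csmult: "Qstep q r z n (csmult c w) = csmult c (Qstep q r z n w)"
  by (simp add: Qstep_def csmult_def algebra_simps)

lemma solves_transform:
  assumes f: "solves (Ustep a b z) f"
    and M: "\<And>n w. M n (Ustep a b z n w) = Qstep q r z n (M (n+1) w)"
  shows "solves (Qstep q r z) (\<lambda>n. csmult c (M n (f n)))"
  unfolding solves_def
proof
  fix n
  have "f n = Ustep a b z n (f (n+1))" using f unfolding solves_def by blast
  then show "csmult c (M n (f n)) = Qstep q r z n (csmult c (M (n + 1) (f (n + 1))))"
    by (simp add: M Qstep_csmult)
qed

lemma solves_transform1:
  assumes f: "solves (Ustep a b z) f"
    and M: "\<And>n w. M n (Ustep a b z n w) = Qstep q r z n (M (n+1) w)"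
  shows "solves (Qstep q r z) (\<lambda>n. M n (f n))"
  unfolding solves_def
proof
  fix n
  have "f n = Ustep a b z n (f (n+1))" using f unfolding solves_def by blast
  then show "M n (f n) = Qstep q r z n (M (n + 1) (f (n + 1)))"
    by (simp add: M)
qed

lemma tz:
  fixes h g :: "int \<Rightarrow> complex"
  assumes z1: "cmod z = 1" and h: "(h \<longlongrightarrow> 0) F" and g: "((\<lambda>n. g n * z powi (m n)) \<longlongrightarrow> L) F"
  shows "((\<lambda>n. (h n * z powi (- m n)) * (g n * z powi (m n))) \<longlongrightarrow> 0) F"
proof -
  have un: "cmod (z powi (- m n)) = 1" for n using unimod_powi[OF z1] .
  have "((\<lambda>n. h n * z powi (- m n)) \<longlongrightarrow> 0) F"
    using h tendsto_unimod0'[where u="\<lambda>n. z powi (- m n)", OF un] by simp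
  from tendsto_mult[OF this g] show ?thesis by simp
qed

lemma powi_cancel: "z \<noteq> 0 \<Longrightarrow> (z::complex) powi (-n) * z powi n = 1"
  by (simp add: power_int_minus)


lemma lim_c1:
  assumes z1: "cmod z = 1" and f: "psi_cond z f"
    and E1: "((\<lambda>n. En q r (n-1)) \<longlongrightarrow> Ei) at_top" and D1: "((\<lambda>n. Dn q r (n-1)) \<longlongrightarrow> Di) at_top"
    and rt: "(r \<longlongrightarrow> 0) at_top" and Ei: "Ei \<noteq> 0" and Di: "Di \<noteq> 0"
  shows "psi_cond z (\<lambda>n. csmult Di (Gamma q r z n (f n)))"
proof -
  have un: "cmod (z powi n) = 1" for n using unimod_powi[OF z1] .
  have f1: "((\<lambda>n. fst (f n)) \<longlongrightarrow> 0) at_top" and f2: "((\<lambda>n. snd (f n) * z powi (-n)) \<longlongrightarrow> 1) at_top"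
    using f unfolding psi_cond_def by auto
  have f1': "((\<lambda>n. fst (f n) * z powi (-n)) \<longlongrightarrow> 0) at_top"
    using f1 tendsto_unimod0'[where u="\<lambda>n. z powi (-n)", OF un] by simp
  have a: "((\<lambda>n. Di * ((1 - inverse (z^2)) / En q r (n-1) * fst (f n))) \<longlongrightarrow> Di * ((1 - inverse (z^2)) / Ei * 0)) at_top"
    by (intro tendsto_intros E1 f1 Ei)
  have b: "((\<lambda>n. Di * (r n / En q r (n-1) * (fst (f n) * z powi (-n)) + 1 / Dn q r (n-1) * (snd (f n) * z powi (-n))))
      \<longlongrightarrow> Di * (0 / Ei * 0 + 1 / Di * 1)) at_top"
    by (intro tendsto_intros E1 D1 f1' f2 rt Ei Di)
  have eq2: "snd (csmult Di (Gamma q r z n (f n))) * z powi (-n) =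
      Di * (r n / En q r (n-1) * (fst (f n) * z powi (-n)) + 1 / Dn q r (n-1) * (snd (f n) * z powi (-n)))" for n
    by (simp add: csmult_def Gamma_def algebra_simps)
  have eq1: "fst (csmult Di (Gamma q r z n (f n))) = Di * ((1 - inverse (z^2)) / En q r (n-1) * fst (f n))" for n
    by (simp add: csmult_def Gamma_def)
  show ?thesis unfolding psi_cond_def eq1 eq2
    using a b Di by simp
qed


lemma zz_inv: "z \<noteq> 0 \<Longrightarrow> (z::complex) powi n * inverse (z powi n) = 1"
  by (simp add: power_int_minus)

lemma lim_c2:
  assumes z1: "cmod z = 1" and f: "psi_cond z f"
    and E1: "((\<lambda>n. En q r (n-1)) \<longlongrightarrow> Ei) at_top" and D1: "((\<lambda>n. Dn q r (n-1)) \<longlongrightarrow> Di) at_top"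
    and D0: "(Dn q r \<longlongrightarrow> Di) at_top"
    and rt: "(r \<longlongrightarrow> 0) at_top" and qt: "(q \<longlongrightarrow> 0) at_top" and Ei: "Ei \<noteq> 0" and Di: "Di \<noteq> 0"
  shows "psi_cond z (\<lambda>n. csmult Di (Lambda q r n (f n)))"
proof -
  have z0: "z \<noteq> 0" using z1 by auto
  have un: "cmod (z powi n) = 1" for n using unimod_powi[OF z1] .
  have f1: "((\<lambda>n. fst (f n)) \<longlongrightarrow> 0) at_top" and f2: "((\<lambda>n. snd (f n) * z powi (-n)) \<longlongrightarrow> 1) at_top"
    using f unfolding psi_cond_def by auto
  have f1': "((\<lambda>n. fst (f n) * z powi (-n)) \<longlongrightarrow> 0) at_top"
    using f1 tendsto_unimod0'[where u="\<lambda>n. z powi (-n)", OF un] by simp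
  have q': "((\<lambda>n. q n * z powi n) \<longlongrightarrow> 0) at_top"
    using qt tendsto_unimod0'[where u="\<lambda>n. z powi n", OF un] by simp
  have a: "((\<lambda>n. Di * (1 / En q r (n-1) * fst (f n) - 1 / Dn q r n * ((q n * z powi n) * (snd (f n) * z powi (-n)))))
     \<longlongrightarrow> Di * (1 / Ei * 0 - 1 / Di * (0 * 1))) at_top"
    by (intro tendsto_intros E1 D0 f1 f2 q' Ei Di)
  have b: "((\<lambda>n. Di * (r n / En q r (n-1) * (fst (f n) * z powi (-n)) + 1 / Dn q r (n-1) * (snd (f n) * z powi (-n))))
      \<longlongrightarrow> Di * (0 / Ei * 0 + 1 / Di * 1)) at_top"
    by (intro tendsto_intros E1 D1 f1' f2 rt Ei Di)
  have eq2: "snd (csmult Di (Lambda q r n (f n))) * z powi (-n) =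
      Di * (r n / En q r (n-1) * (fst (f n) * z powi (-n)) + 1 / Dn q r (n-1) * (snd (f n) * z powi (-n)))" for n
    by (simp add: csmult_def Lambda_def algebra_simps)
  have eq1: "fst (csmult Di (Lambda q r n (f n))) = Di * (1 / En q r (n-1) * fst (f n) - 1 / Dn q r n * ((q n * z powi n) * (snd (f n) * z powi (-n))))" for n
    unfolding csmult_def Lambda_def fst_conv snd_conv divide_inverse power_int_minus
    using zz_inv[OF z0, of n] by algebra
  show ?thesis unfolding psi_cond_def eq1 eq2
    using a b Di by simp
qed

lemma lim_c3:
  assumes z1: "cmod z = 1" and f: "phi_cond z f" and z2: "1 - inverse (z^2) \<noteq> 0"
    and E1: "((\<lambda>n. En q r (n-1)) \<longlongrightarrow> 1) at_bot" and D1: "((\<lambda>n. Dn q r (n-1)) \<longlongrightarrow> 1) at_bot"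
    and rb: "(r \<longlongrightarrow> 0) at_bot"
  shows "phi_cond z (\<lambda>n. csmult (1 / (1 - inverse (z^2))) (Gamma q r z n (f n)))"
proof -
  have z0: "z \<noteq> 0" using z1 by auto
  have un: "cmod (z powi n) = 1" for n using unimod_powi[OF z1] .
  have f1: "((\<lambda>n. fst (f n) * z powi n) \<longlongrightarrow> 1) at_bot" and f2: "((\<lambda>n. snd (f n)) \<longlongrightarrow> 0) at_bot"
    using f unfolding phi_cond_def by auto
  have r': "((\<lambda>n. r n * z powi (-n)) \<longlongrightarrow> 0) at_bot"
    using rb tendsto_unimod0'[where u="\<lambda>n. z powi (-n)", OF un] by simp
  define c where "c = 1 / (1 - inverse (z^2))"
  have a: "((\<lambda>n. c * (1 - inverse (z^2)) * (1 / En q r (n-1)) * (fst (f n) * z powi n))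
     \<longlongrightarrow> c * (1 - inverse (z^2)) * (1 / 1) * 1) at_bot"
    by (intro tendsto_intros E1 f1) simp
  have b: "((\<lambda>n. c * ((r n * z powi (-n)) / En q r (n-1) * (fst (f n) * z powi n) + 1 / Dn q r (n-1) * snd (f n)))
      \<longlongrightarrow> c * (0 / 1 * 1 + 1 / 1 * 0)) at_bot"
    by (intro tendsto_intros E1 D1 f1 f2 r') simp_all
  have eq1: "fst (csmult c (Gamma q r z n (f n))) * z powi n = c * (1 - inverse (z^2)) * (1 / En q r (n-1)) * (fst (f n) * z powi n)" for n
    unfolding csmult_def Gamma_def fst_conv snd_conv divide_inverse by algebra
  have eq2: "snd (csmult c (Gamma q r z n (f n))) = c * ((r n * z powi (-n)) / En q r (n-1) * (fst (f n) * z powi n) + 1 / Dn q r (n-1) * snd (f n))" for n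
    unfolding csmult_def Gamma_def fst_conv snd_conv divide_inverse power_int_minus
    using zz_inv[OF z0, of n] by algebra
  show ?thesis unfolding c_def[symmetric] phi_cond_def eq1 eq2
    using a b z2 by (simp add: c_def)
qed

lemma lim_c4:
  assumes z1: "cmod z = 1" and f: "phi_cond z f"
    and E1: "((\<lambda>n. En q r (n-1)) \<longlongrightarrow> 1) at_bot" and D1: "((\<lambda>n. Dn q r (n-1)) \<longlongrightarrow> 1) at_bot"
    and D0: "(Dn q r \<longlongrightarrow> 1) at_bot"
    and rb: "(r \<longlongrightarrow> 0) at_bot" and qb: "(q \<longlongrightarrow> 0) at_bot"
  shows "phi_cond z (\<lambda>n. Lambda q r n (f n))"
proof -
  have z0: "z \<noteq> 0" using z1 by auto
  have un: "cmod (z powi n) = 1" for n using unimod_powi[OF z1] .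
  have f1: "((\<lambda>n. fst (f n) * z powi n) \<longlongrightarrow> 1) at_bot" and f2: "((\<lambda>n. snd (f n)) \<longlongrightarrow> 0) at_bot"
    using f unfolding phi_cond_def by auto
  have r': "((\<lambda>n. r n * z powi (-n)) \<longlongrightarrow> 0) at_bot"
    using rb tendsto_unimod0'[where u="\<lambda>n. z powi (-n)", OF un] by simp
  have q': "((\<lambda>n. q n * z powi n) \<longlongrightarrow> 0) at_bot"
    using qb tendsto_unimod0'[where u="\<lambda>n. z powi n", OF un] by simp
  have a: "((\<lambda>n. 1 / En q r (n-1) * (fst (f n) * z powi n) - 1 / Dn q r n * ((q n * z powi n) * snd (f n)))
     \<longlongrightarrow> 1 / 1 * 1 - 1 / 1 * (0 * 0)) at_bot"
    by (intro tendsto_intros E1 D0 f1 f2 q') simp_all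
  have b: "((\<lambda>n. (r n * z powi (-n)) / En q r (n-1) * (fst (f n) * z powi n) + 1 / Dn q r (n-1) * snd (f n))
      \<longlongrightarrow> 0 / 1 * 1 + 1 / 1 * 0) at_bot"
    by (intro tendsto_intros E1 D1 f1 f2 r') simp_all
  have eq1: "fst (Lambda q r n (f n)) * z powi n = 1 / En q r (n-1) * (fst (f n) * z powi n) - 1 / Dn q r n * ((q n * z powi n) * snd (f n))" for n
    by (simp add: Lambda_def algebra_simps)
  have eq2: "snd (Lambda q r n (f n)) = (r n * z powi (-n)) / En q r (n-1) * (fst (f n) * z powi n) + 1 / Dn q r (n-1) * snd (f n)" for n
    unfolding Lambda_def fst_conv snd_conv divide_inverse power_int_minus
    using zz_inv[OF z0, of n] by algebra
  show ?thesis unfolding phi_cond_def eq1 eq2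
    using a b by simp
qed

lemma lim_c5:
  assumes z1: "cmod z = 1" and f: "psibar_cond z f" and z2: "1 - inverse (z^2) \<noteq> 0"
    and E1: "((\<lambda>n. En q r (n-1)) \<longlongrightarrow> Ei) at_top" and D1: "((\<lambda>n. Dn q r (n-1)) \<longlongrightarrow> Di) at_top"
    and rt: "(r \<longlongrightarrow> 0) at_top" and Ei: "Ei \<noteq> 0" and Di: "Di \<noteq> 0"
  shows "psibar_cond z (\<lambda>n. csmult (Ei / (1 - inverse (z^2))) (Gamma q r z n (f n)))"
proof -
  have z0: "z \<noteq> 0" using z1 by auto
  have un: "cmod (z powi n) = 1" for n using unimod_powi[OF z1] .
  have f1: "((\<lambda>n. fst (f n) * z powi n) \<longlongrightarrow> 1) at_top" and f2: "((\<lambda>n. snd (f n)) \<longlongrightarrow> 0) at_top"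
    using f unfolding psibar_cond_def by auto
  have r': "((\<lambda>n. r n * z powi (-n)) \<longlongrightarrow> 0) at_top"
    using rt tendsto_unimod0'[where u="\<lambda>n. z powi (-n)", OF un] by simp
  define c where "c = Ei / (1 - inverse (z^2))"
  have a: "((\<lambda>n. c * (1 - inverse (z^2)) * (1 / En q r (n-1)) * (fst (f n) * z powi n))
     \<longlongrightarrow> c * (1 - inverse (z^2)) * (1 / Ei) * 1) at_top"
    by (intro tendsto_intros E1 f1 Ei)
  have b: "((\<lambda>n. c * ((r n * z powi (-n)) / En q r (n-1) * (fst (f n) * z powi n) + 1 / Dn q r (n-1) * snd (f n)))
      \<longlongrightarrow> c * (0 / Ei * 1 + 1 / Di * 0)) at_top"
    by (intro tendsto_intros E1 D1 f1 f2 r' Ei Di)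
  have eq1: "fst (csmult c (Gamma q r z n (f n))) * z powi n = c * (1 - inverse (z^2)) * (1 / En q r (n-1)) * (fst (f n) * z powi n)" for n
    unfolding csmult_def Gamma_def fst_conv snd_conv divide_inverse by algebra
  have eq2: "snd (csmult c (Gamma q r z n (f n))) = c * ((r n * z powi (-n)) / En q r (n-1) * (fst (f n) * z powi n) + 1 / Dn q r (n-1) * snd (f n))" for n
    unfolding csmult_def Gamma_def fst_conv snd_conv divide_inverse power_int_minus
    using zz_inv[OF z0, of n] by algebra
  show ?thesis unfolding c_def[symmetric] psibar_cond_def eq1 eq2
    using a b z2 Ei by (simp add: c_def)
qed

lemma lim_c6:
  assumes z1: "cmod z = 1" and f: "psibar_cond z f"
    and E1: "((\<lambda>n. En q r (n-1)) \<longlongrightarrow> Ei) at_top" and D1: "((\<lambda>n. Dn q r (n-1)) \<longlongrightarrow> Di) at_top"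
    and D0: "(Dn q r \<longlongrightarrow> Di) at_top"
    and rt: "(r \<longlongrightarrow> 0) at_top" and qt: "(q \<longlongrightarrow> 0) at_top" and Ei: "Ei \<noteq> 0" and Di: "Di \<noteq> 0"
  shows "psibar_cond z (\<lambda>n. csmult Ei (Lambda q r n (f n)))"
proof -
  have z0: "z \<noteq> 0" using z1 by auto
  have un: "cmod (z powi n) = 1" for n using unimod_powi[OF z1] .
  have f1: "((\<lambda>n. fst (f n) * z powi n) \<longlongrightarrow> 1) at_top" and f2: "((\<lambda>n. snd (f n)) \<longlongrightarrow> 0) at_top"
    using f unfolding psibar_cond_def by auto
  have r': "((\<lambda>n. r n * z powi (-n)) \<longlongrightarrow> 0) at_top"
    using rt tendsto_unimod0'[where u="\<lambda>n. z powi (-n)", OF un] by simp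
  have q': "((\<lambda>n. q n * z powi n) \<longlongrightarrow> 0) at_top"
    using qt tendsto_unimod0'[where u="\<lambda>n. z powi n", OF un] by simp
  have a: "((\<lambda>n. Ei * (1 / En q r (n-1) * (fst (f n) * z powi n) - 1 / Dn q r n * ((q n * z powi n) * snd (f n))))
     \<longlongrightarrow> Ei * (1 / Ei * 1 - 1 / Di * (0 * 0))) at_top"
    by (intro tendsto_intros E1 D0 f1 f2 q' Ei Di)
  have b: "((\<lambda>n. Ei * ((r n * z powi (-n)) / En q r (n-1) * (fst (f n) * z powi n) + 1 / Dn q r (n-1) * snd (f n)))
      \<longlongrightarrow> Ei * (0 / Ei * 1 + 1 / Di * 0)) at_top"
    by (intro tendsto_intros E1 D1 f1 f2 r' Ei Di)
  have eq1: "fst (csmult Ei (Lambda q r n (f n))) * z powi n = Ei * (1 / En q r (n-1) * (fst (f n) * z powi n) - 1 / Dn q r n * ((q n * z powi n) * snd (f n)))" for n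
    by (simp add: csmult_def Lambda_def algebra_simps)
  have eq2: "snd (csmult Ei (Lambda q r n (f n))) = Ei * ((r n * z powi (-n)) / En q r (n-1) * (fst (f n) * z powi n) + 1 / Dn q r (n-1) * snd (f n))" for n
    unfolding csmult_def Lambda_def fst_conv snd_conv divide_inverse power_int_minus
    using zz_inv[OF z0, of n] by algebra
  show ?thesis unfolding psibar_cond_def eq1 eq2
    using a b Ei by simp
qed

lemma lim_c7:
  assumes z1: "cmod z = 1" and f: "phibar_cond z f"
    and E1: "((\<lambda>n. En q r (n-1)) \<longlongrightarrow> 1) at_bot" and D1: "((\<lambda>n. Dn q r (n-1)) \<longlongrightarrow> 1) at_bot"
    and rb: "(r \<longlongrightarrow> 0) at_bot"
  shows "phibar_cond z (\<lambda>n. Gamma q r z n (f n))"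
proof -
  have un: "cmod (z powi n) = 1" for n using unimod_powi[OF z1] .
  have f1: "((\<lambda>n. fst (f n)) \<longlongrightarrow> 0) at_bot" and f2: "((\<lambda>n. snd (f n) * z powi (-n)) \<longlongrightarrow> 1) at_bot"
    using f unfolding phibar_cond_def by auto
  have f1': "((\<lambda>n. fst (f n) * z powi (-n)) \<longlongrightarrow> 0) at_bot"
    using f1 tendsto_unimod0'[where u="\<lambda>n. z powi (-n)", OF un] by simp
  have a: "((\<lambda>n. (1 - inverse (z^2)) / En q r (n-1) * fst (f n)) \<longlongrightarrow> (1 - inverse (z^2)) / 1 * 0) at_bot"
    by (intro tendsto_intros E1 f1) simp
  have b: "((\<lambda>n. r n / En q r (n-1) * (fst (f n) * z powi (-n)) + 1 / Dn q r (n-1) * (snd (f n) * z powi (-n)))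
      \<longlongrightarrow> 0 / 1 * 0 + 1 / 1 * 1) at_bot"
    by (intro tendsto_intros E1 D1 f1' f2 rb) simp_all
  have eq2: "snd (Gamma q r z n (f n)) * z powi (-n) =
      r n / En q r (n-1) * (fst (f n) * z powi (-n)) + 1 / Dn q r (n-1) * (snd (f n) * z powi (-n))" for n
    by (simp add: Gamma_def algebra_simps)
  have eq1: "fst (Gamma q r z n (f n)) = (1 - inverse (z^2)) / En q r (n-1) * fst (f n)" for n
    by (simp add: Gamma_def)
  show ?thesis unfolding phibar_cond_def eq1 eq2
    using a b by simp
qed

lemma lim_c8:
  assumes z1: "cmod z = 1" and f: "phibar_cond z f"
    and E1: "((\<lambda>n. En q r (n-1)) \<longlongrightarrow> 1) at_bot" and D1: "((\<lambda>n. Dn q r (n-1)) \<longlongrightarrow> 1) at_bot"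
    and D0: "(Dn q r \<longlongrightarrow> 1) at_bot"
    and rb: "(r \<longlongrightarrow> 0) at_bot" and qb: "(q \<longlongrightarrow> 0) at_bot"
  shows "phibar_cond z (\<lambda>n. Lambda q r n (f n))"
proof -
  have z0: "z \<noteq> 0" using z1 by auto
  have un: "cmod (z powi n) = 1" for n using unimod_powi[OF z1] .
  have f1: "((\<lambda>n. fst (f n)) \<longlongrightarrow> 0) at_bot" and f2: "((\<lambda>n. snd (f n) * z powi (-n)) \<longlongrightarrow> 1) at_bot"
    using f unfolding phibar_cond_def by auto
  have f1': "((\<lambda>n. fst (f n) * z powi (-n)) \<longlongrightarrow> 0) at_bot"
    using f1 tendsto_unimod0'[where u="\<lambda>n. z powi (-n)", OF un] by simp
  have q': "((\<lambda>n. q n * z powi n) \<longlongrightarrow> 0) at_bot"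
    using qb tendsto_unimod0'[where u="\<lambda>n. z powi n", OF un] by simp
  have a: "((\<lambda>n. 1 / En q r (n-1) * fst (f n) - 1 / Dn q r n * ((q n * z powi n) * (snd (f n) * z powi (-n))))
     \<longlongrightarrow> 1 / 1 * 0 - 1 / 1 * (0 * 1)) at_bot"
    by (intro tendsto_intros E1 D0 f1 f2 q') simp_all
  have b: "((\<lambda>n. r n / En q r (n-1) * (fst (f n) * z powi (-n)) + 1 / Dn q r (n-1) * (snd (f n) * z powi (-n)))
      \<longlongrightarrow> 0 / 1 * 0 + 1 / 1 * 1) at_bot"
    by (intro tendsto_intros E1 D1 f1' f2 rb) simp_all
  have eq2: "snd (Lambda q r n (f n)) * z powi (-n) =
      r n / En q r (n-1) * (fst (f n) * z powi (-n)) + 1 / Dn q r (n-1) * (snd (f n) * z powi (-n))" for n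
    by (simp add: Lambda_def algebra_simps)
  have eq1: "fst (Lambda q r n (f n)) = 1 / En q r (n-1) * fst (f n) - 1 / Dn q r n * ((q n * z powi n) * (snd (f n) * z powi (-n)))" for n
    unfolding Lambda_def fst_conv snd_conv divide_inverse power_int_minus
    using zz_inv[OF z0, of n] by algebra
  show ?thesis unfolding phibar_cond_def eq1 eq2
    using a b by simp
qed


lemma zsum_tri_add:
  assumes A: "zsum (\<lambda>n. cmod (f n))" and B: "zsum (\<lambda>n. cmod (g n))" shows "zsum (\<lambda>n. cmod (f n + g n))"
proof (rule zsum_comp[OF zsum_add[OF A B], of _ 1])
  fix n show "\<bar>cmod (f n + g n)\<bar> \<le> 1 * (cmod (f n) + cmod (g n))" using norm_triangle_ineq[of "f n" "g n"] by simp
qed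

lemma zsum_tri_diff:
  assumes A: "zsum (\<lambda>n. cmod (f n))" and B: "zsum (\<lambda>n. cmod (g n))" shows "zsum (\<lambda>n. cmod (f n - g n))"
proof (rule zsum_comp[OF zsum_add[OF A B], of _ 1])
  fix n show "\<bar>cmod (f n - g n)\<bar> \<le> 1 * (cmod (f n) + cmod (g n))" using norm_triangle_ineq4[of "f n" "g n"] by simp
qed

lemma zsum_uminus: "zsum (\<lambda>n. cmod (f n)) \<Longrightarrow> zsum (\<lambda>n. cmod (- f n))"
  by simp

lemma zsum_shift_c: "zsum (\<lambda>n. cmod (f n)) \<Longrightarrow> zsum (\<lambda>n. cmod (f (n+1)))"
  using zsum_shift[of "\<lambda>n. cmod (f n)"] by simp

theorem theorem3p3:
  fixes q r :: "int \<Rightarrow> complex" and z :: complex and n :: int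
  assumes "rapid_decay q" and "rapid_decay r"
    and "\<And>j. 1 - q j * r j \<noteq> 0"
    and "\<And>j. 1 + q j * r (j + 1) \<noteq> 0"
    and "cmod z = 1"
  defines "u \<equiv> useq q r" and "v \<equiv> vseq q r" and "p \<equiv> pseq q r" and "s \<equiv> sseq q r"
  shows
    "jost_psi (Qstep q r z) z n = csmult (Dinf q r) (Gamma q r z n (jost_psi (Ustep u v z) z n)) \<and>
     jost_psi (Qstep q r z) z n = csmult (Dinf q r) (Lambda q r n (jost_psi (Ustep p s z) z n)) \<and>
     (z ^ 2 \<noteq> 1 \<longrightarrow>
        jost_phi (Qstep q r z) z n =
          csmult (1 / (1 - inverse (z ^ 2))) (Gamma q r z n (jost_phi (Ustep u v z) z n))) \<and>
     jost_phi (Qstep q r z) z n = Lambda q r n (jost_phi (Ustep p s z) z n) \<and>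
     (z ^ 2 \<noteq> 1 \<longrightarrow>
        jost_psibar (Qstep q r z) z n =
          csmult (Einf q r / (1 - inverse (z ^ 2))) (Gamma q r z n (jost_psibar (Ustep u v z) z n))) \<and>
     jost_psibar (Qstep q r z) z n = csmult (Einf q r) (Lambda q r n (jost_psibar (Ustep p s z) z n)) \<and>
     jost_phibar (Qstep q r z) z n = Gamma q r z n (jost_phibar (Ustep u v z) z n) \<and>
     jost_phibar (Qstep q r z) z n = Lambda q r n (jost_phibar (Ustep p s z) z n)"
proof -
  note rq = assms(1) and rr = assms(2) and nz1 = assms(3) and nz2 = assms(4) and z1 = assms(5)
  have z0: "z \<noteq> 0" using z1 by auto
  note DE = DE_facts[OF rq rr nz1 nz2]
  note Drec = DE(1) and Dbot = DE(2) and Dnz = DE(3) and Dtop = DE(4) and Dinfnz = DE(5)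
  note Erec = DE(6) and Ebot = DE(7) and Enz = DE(8) and Etop = DE(9) and Einfnz = DE(10)
  note fq = rd_facts[OF rq] and fr = rd_facts[OF rr]
  have E1t: "((\<lambda>n. En q r (n-1)) \<longlongrightarrow> Einf q r) at_top"
    using filterlim_compose[OF Etop int_shift_top[of "-1"]] by simp
  have D1t: "((\<lambda>n. Dn q r (n-1)) \<longlongrightarrow> Dinf q r) at_top"
    using filterlim_compose[OF Dtop int_shift_top[of "-1"]] by simp
  have E1b: "((\<lambda>n. En q r (n-1)) \<longlongrightarrow> 1) at_bot"
    using filterlim_compose[OF Ebot int_shift_bot[of "-1"]] by simp
  have D1b: "((\<lambda>n. Dn q r (n-1)) \<longlongrightarrow> 1) at_bot"
    using filterlim_compose[OF Dbot int_shift_bot[of "-1"]] by simp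
  have r1t: "((\<lambda>n. r (n+1)) \<longlongrightarrow> 0) at_top"
    using filterlim_compose[OF fr(2) int_shift_top[of 1]] by simp
  have r1b: "((\<lambda>n. r (n+1)) \<longlongrightarrow> 0) at_bot"
    using filterlim_compose[OF fr(3) int_shift_bot[of 1]] by simp
  have q1t: "((\<lambda>n. q (n+1)) \<longlongrightarrow> 0) at_top"
    using filterlim_compose[OF fq(2) int_shift_top[of 1]] by simp
  have q1b: "((\<lambda>n. q (n+1)) \<longlongrightarrow> 0) at_bot"
    using filterlim_compose[OF fq(3) int_shift_bot[of 1]] by simp
  obtain CE where CE: "\<And>n. cmod (En q r n) \<le> CE" using bounded_two_sided[OF Etop Ebot] by blast
  obtain CD where CD: "\<And>n. cmod (Dn q r n) \<le> CD" using bounded_two_sided[OF Dtop Dbot] by blast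
  obtain CEi where CEi: "\<And>n. cmod (inverse (En q r n)) \<le> CEi"
    using bounded_two_sided[OF tendsto_inverse[OF Etop Einfnz] tendsto_inverse[OF Ebot]] by auto
  obtain CDi where CDi: "\<And>n. cmod (inverse (Dn q r n)) \<le> CDi"
    using bounded_two_sided[OF tendsto_inverse[OF Dtop Dinfnz] tendsto_inverse[OF Dbot]] by auto
  obtain Cr where Cr: "\<And>n. \<bar>cmod (r n)\<bar> \<le> Cr" using zsum_bounded[OF fr(1)] by blast
  obtain Cq where Cq: "\<And>n. \<bar>cmod (q n)\<bar> \<le> Cq" using zsum_bounded[OF fq(1)] by blast
  have zr1: "zsum (\<lambda>n. cmod (r (n+1)))" by (rule zsum_shift_c[OF fr(1)])
  have zq1: "zsum (\<lambda>n. cmod (q (n+1)))" by (rule zsum_shift_c[OF fq(1)])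
  have zu: "zsum (\<lambda>n. cmod (useq q r n))"
  proof (rule zsum_norm_bd[OF fq(1), of _ "CE * CDi"])
    fix n show "cmod (useq q r n) \<le> CE * CDi * cmod (q n)"
      unfolding useq_def divide_inverse by (rule norm3_le[OF CE CDi])
  qed
  have zX: "zsum (\<lambda>n. cmod (- r n + r (n + 1) - q n * r n * r (n + 1)))"
  proof (intro zsum_tri_diff zsum_tri_add zsum_uminus fr(1) zr1)
    show "zsum (\<lambda>n. cmod (q n * r n * r (n + 1)))"
      by (rule zsum_norm_bd[OF fq(1), of _ "Cr * Cr"]) (rule norm3_le, use Cr in auto)
  qed
  have zv: "zsum (\<lambda>n. cmod (vseq q r n))"
  proof (rule zsum_norm_bd[OF zX, of _ "CD * CEi"])
    fix n show "cmod (vseq q r n) \<le> CD * CEi * cmod (- r n + r (n + 1) - q n * r n * r (n + 1))"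
      unfolding vseq_def divide_inverse by (rule norm3_le[OF CD CEi])
  qed
  have zY: "zsum (\<lambda>n. cmod (q n - q (n + 1) - q n * q (n + 1) * r (n + 1)))"
  proof (intro zsum_tri_diff fq(1) zq1)
    show "zsum (\<lambda>n. cmod (q n * q (n + 1) * r (n + 1)))"
      by (rule zsum_norm_bd[OF fq(1), of _ "Cq * Cr"]) (rule norm3_le, use Cr Cq in auto)
  qed
  have zp: "zsum (\<lambda>n. cmod (pseq q r n))"
  proof (rule zsum_norm_bd[OF zY, of _ "CE * CDi"])
    fix n show "cmod (pseq q r n) \<le> CE * CDi * cmod (q n - q (n + 1) - q n * q (n + 1) * r (n + 1))"
      unfolding pseq_def divide_inverse by (rule norm3_le[OF CE CDi])
  qed
  have zs: "zsum (\<lambda>n. cmod (sseq q r n))"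
  proof (rule zsum_norm_bd[OF zr1, of _ "CD * CEi"])
    fix n show "cmod (sseq q r n) \<le> CD * CEi * cmod (r (n + 1))"
      unfolding sseq_def divide_inverse by (rule norm3_le[OF CD CEi])
  qed
  have inv_uv: "(1 - useq q r n * vseq q r n) * ((1 - q n * r n) * (1 + q n * r (n+1))) = 1" for n
  proof -
    have i1: "Dn q r (n-1) * inverse (Dn q r (n-1)) = 1" "En q r (n-1) * inverse (En q r (n-1)) = 1"
      "(1 - q n * r n) * inverse (1 - q n * r n) = 1" "(1 + q n * r (n+1)) * inverse (1 + q n * r (n+1)) = 1"
      using Dnz Enz nz1 nz2 by auto
    show ?thesis
      unfolding useq_def vseq_def Drec[of n] Erec[of n] divide_inverse inverse_mult_distrib
      using i1 by algebra
  qed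
  have inv_ps: "(1 - pseq q r n * sseq q r n) * ((1 - q (n+1) * r (n+1)) * (1 + q n * r (n+1))) = 1" for n
  proof -
    have D1: "Dn q r (n+1) = Dn q r n * (1 - q (n+1) * r (n+1))" using Drec[of "n+1"] by simp
    have i1: "Dn q r n * inverse (Dn q r n) = 1" "En q r (n-1) * inverse (En q r (n-1)) = 1"
      "(1 - q (n+1) * r (n+1)) * inverse (1 - q (n+1) * r (n+1)) = 1" "(1 + q n * r (n+1)) * inverse (1 + q n * r (n+1)) = 1"
      using Dnz Enz nz1 nz2 by auto
    show ?thesis
      unfolding pseq_def sseq_def D1 Erec[of n] divide_inverse inverse_mult_distrib
      using i1 by algebra
  qed
  have uvnz: "1 - useq q r n * vseq q r n \<noteq> 0" for n using inv_uv[of n] by auto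
  have psnz: "1 - pseq q r n * sseq q r n \<noteq> 0" for n using inv_ps[of n] by auto
  have uvi: "inverse (1 - useq q r n * vseq q r n) = (1 - q n * r n) * (1 + q n * r (n+1))" for n
    using inv_uv[of n] by (rule inverse_unique)
  have psinv: "inverse (1 - pseq q r n * sseq q r n) = (1 - q (n+1) * r (n+1)) * (1 + q n * r (n+1))" for n
    using inv_ps[of n] by (rule inverse_unique)
  obtain Cuv where Cuv: "\<And>n. cmod ((1 - q n * r n) * (1 + q n * r (n+1))) \<le> Cuv"
  proof -
    have "((\<lambda>n. (1 - q n * r n) * (1 + q n * r (n+1))) \<longlongrightarrow> (1 - 0 * 0) * (1 + 0 * 0)) at_top"
      by (intro tendsto_intros fq(2) fr(2) r1t)
    moreover have "((\<lambda>n. (1 - q n * r n) * (1 + q n * r (n+1))) \<longlongrightarrow> (1 - 0 * 0) * (1 + 0 * 0)) at_bot"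
      by (intro tendsto_intros fq(3) fr(3) r1b)
    ultimately show ?thesis using bounded_two_sided that by blast
  qed
  obtain Cps where Cps: "\<And>n. cmod ((1 - q (n+1) * r (n+1)) * (1 + q n * r (n+1))) \<le> Cps"
  proof -
    have "((\<lambda>n. (1 - q (n+1) * r (n+1)) * (1 + q n * r (n+1))) \<longlongrightarrow> (1 - 0 * 0) * (1 + 0 * 0)) at_top"
      by (intro tendsto_intros q1t fq(2) r1t)
    moreover have "((\<lambda>n. (1 - q (n+1) * r (n+1)) * (1 + q n * r (n+1))) \<longlongrightarrow> (1 - 0 * 0) * (1 + 0 * 0)) at_bot"
      by (intro tendsto_intros q1b fq(3) r1b)
    ultimately show ?thesis using bounded_two_sided that by blast
  qed
  have uvC: "cmod (inverse (1 - useq q r n * vseq q r n)) \<le> Cuv" for n unfolding uvi by (rule Cuv)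
  have psC: "cmod (inverse (1 - pseq q r n * sseq q r n)) \<le> Cps" for n unfolding psinv by (rule Cps)
  note JQ = Q_jost[OF z1 fq(1) fr(1)]
  note JUV = U_jost[OF z1 zu zv uvnz uvC]
  note JPS = U_jost[OF z1 zp zs psnz psC]
  have MG: "Gamma q r z n (Ustep (useq q r) (vseq q r) z n w) = Qstep q r z n (Gamma q r z (n+1) w)" for n w
    by (rule Gamma_step[OF z0 Dnz Enz nz1 nz2 Drec[of n] Erec[of n]])
  have MLam: "Lambda q r n (Ustep (pseq q r) (sseq q r) z n w) = Qstep q r z n (Lambda q r (n+1) w)" for n w
  proof (rule Lambda_step[OF z0 Dnz Enz nz1 nz2 _ Drec[of n] Erec[of n]])
    show "1 - q (n + 1) * r (n + 1) \<noteq> 0" by (rule nz1)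
    show "Dn q r (n + 1) = Dn q r n * (1 - q (n + 1) * r (n + 1))" using Drec[of "n+1"] by simp
  qed
  define f1 where "f1 = jost_psi (Ustep (useq q r) (vseq q r) z) z"
  define f2 where "f2 = jost_psi (Ustep (pseq q r) (sseq q r) z) z"
  define f3 where "f3 = jost_phi (Ustep (useq q r) (vseq q r) z) z"
  define f4 where "f4 = jost_phi (Ustep (pseq q r) (sseq q r) z) z"
  define f5 where "f5 = jost_psibar (Ustep (useq q r) (vseq q r) z) z"
  define f6 where "f6 = jost_psibar (Ustep (pseq q r) (sseq q r) z) z"
  define f7 where "f7 = jost_phibar (Ustep (useq q r) (vseq q r) z) z"
  define f8 where "f8 = jost_phibar (Ustep (pseq q r) (sseq q r) z) z"
  have h1: "solves (Ustep (useq q r) (vseq q r) z) f1 \<and> psi_cond z f1" unfolding f1_def jost_psi_def by (rule theI'[OF JUV(1)])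
  have h2: "solves (Ustep (pseq q r) (sseq q r) z) f2 \<and> psi_cond z f2" unfolding f2_def jost_psi_def by (rule theI'[OF JPS(1)])
  have h3: "solves (Ustep (useq q r) (vseq q r) z) f3 \<and> phi_cond z f3" unfolding f3_def jost_phi_def by (rule theI'[OF JUV(3)])
  have h4: "solves (Ustep (pseq q r) (sseq q r) z) f4 \<and> phi_cond z f4" unfolding f4_def jost_phi_def by (rule theI'[OF JPS(3)])
  have h5: "solves (Ustep (useq q r) (vseq q r) z) f5 \<and> psibar_cond z f5" unfolding f5_def jost_psibar_def by (rule theI'[OF JUV(2)])
  have h6: "solves (Ustep (pseq q r) (sseq q r) z) f6 \<and> psibar_cond z f6" unfolding f6_def jost_psibar_def by (rule theI'[OF JPS(2)])
  have h7: "solves (Ustep (useq q r) (vseq q r) z) f7 \<and> phibar_cond z f7" unfolding f7_def jost_phibar_def by (rule theI'[OF JUV(4)])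
  have h8: "solves (Ustep (pseq q r) (sseq q r) z) f8 \<and> phibar_cond z f8" unfolding f8_def jost_phibar_def by (rule theI'[OF JPS(4)])
  have c1: "jost_psi (Qstep q r z) z = (\<lambda>n. csmult (Dinf q r) (Gamma q r z n (f1 n)))"
    unfolding jost_psi_def
    by (rule the1_equality[OF JQ(1)])
       (use solves_transform[OF h1[THEN conjunct1] MG] lim_c1[OF z1 h1[THEN conjunct2] E1t D1t fr(2) Einfnz Dinfnz] in blast)
  have c2: "jost_psi (Qstep q r z) z = (\<lambda>n. csmult (Dinf q r) (Lambda q r n (f2 n)))"
    unfolding jost_psi_def
    by (rule the1_equality[OF JQ(1)])
       (use solves_transform[OF h2[THEN conjunct1] MLam] lim_c2[OF z1 h2[THEN conjunct2] E1t D1t Dtop fr(2) fq(2) Einfnz Dinfnz] in blast)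
  have c3: "jost_phi (Qstep q r z) z = (\<lambda>n. csmult (1 / (1 - inverse (z ^ 2))) (Gamma q r z n (f3 n)))"
    if zz: "z ^ 2 \<noteq> 1"
  proof -
    have zz': "1 - inverse (z ^ 2) \<noteq> 0" using zz by (simp add: inverse_eq_1_iff)
    show ?thesis unfolding jost_phi_def
      by (rule the1_equality[OF JQ(3)])
         (use solves_transform[OF h3[THEN conjunct1] MG] lim_c3[OF z1 h3[THEN conjunct2] zz' E1b D1b fr(3)] in blast)
  qed
  have c4: "jost_phi (Qstep q r z) z = (\<lambda>n. Lambda q r n (f4 n))"
    unfolding jost_phi_def
    by (rule the1_equality[OF JQ(3)])
       (use solves_transform1[OF h4[THEN conjunct1] MLam] lim_c4[OF z1 h4[THEN conjunct2] E1b D1b Dbot fr(3) fq(3)] in blast)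
  have c5: "jost_psibar (Qstep q r z) z = (\<lambda>n. csmult (Einf q r / (1 - inverse (z ^ 2))) (Gamma q r z n (f5 n)))"
    if zz: "z ^ 2 \<noteq> 1"
  proof -
    have zz': "1 - inverse (z ^ 2) \<noteq> 0" using zz by (simp add: inverse_eq_1_iff)
    show ?thesis unfolding jost_psibar_def
      by (rule the1_equality[OF JQ(2)])
         (use solves_transform[OF h5[THEN conjunct1] MG] lim_c5[OF z1 h5[THEN conjunct2] zz' E1t D1t fr(2) Einfnz Dinfnz] in blast)
  qed
  have c6: "jost_psibar (Qstep q r z) z = (\<lambda>n. csmult (Einf q r) (Lambda q r n (f6 n)))"
    unfolding jost_psibar_def
    by (rule the1_equality[OF JQ(2)])
       (use solves_transform[OF h6[THEN conjunct1] MLam] lim_c6[OF z1 h6[THEN conjunct2] E1t D1t Dtop fr(2) fq(2) Einfnz Dinfnz] in blast)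
  have c7: "jost_phibar (Qstep q r z) z = (\<lambda>n. Gamma q r z n (f7 n))"
    unfolding jost_phibar_def
    by (rule the1_equality[OF JQ(4)])
       (use solves_transform1[OF h7[THEN conjunct1] MG] lim_c7[OF z1 h7[THEN conjunct2] E1b D1b fr(3)] in blast)
  have c8: "jost_phibar (Qstep q r z) z = (\<lambda>n. Lambda q r n (f8 n))"
    unfolding jost_phibar_def
    by (rule the1_equality[OF JQ(4)])
       (use solves_transform1[OF h8[THEN conjunct1] MLam] lim_c8[OF z1 h8[THEN conjunct2] E1b D1b Dbot fr(3) fq(3)] in blast)
  show ?thesis
    unfolding u_def v_def p_def s_def
    apply (intro conjI impI)
    subgoal using c1 by (simp add: f1_def)
    subgoal using c2 by (simp add: f2_def)
    subgoal using c3 by (simp add: f3_def)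
    subgoal using c4 by (simp add: f4_def)
    subgoal using c5 by (simp add: f5_def)
    subgoal using c6 by (simp add: f6_def)
    subgoal using c7 by (simp add: f7_def)
    subgoal using c8 by (simp add: f8_def)
    done
qed

end
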